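(* Let $N\geq1$ and let $r$ be an integer with $-(N-1)\leq r\leq N-1$ and $r\neq\pm(N-2)$. Let $\hat\rho$ be any $N$-qubit state with Dyson's rank at most $r$, and let $\mathbf n\in\mathbb R^3$ be a unit vector. If $r\neq4-N$, then $$F_Q[\hat\rho,\hat J_{\mathbf n}]\leq\frac{(N+r)^2}{4}-\frac14+N,$$ and if $r=4-N$, then $F_Q[\hat\rho,\hat J_{\mathbf n}]\leq N+4$.
   Context: Consider $N$ qubits labelled $1,\dots,N$. For a unit vector $\mathbf n\in\mathbb R^3$, $\hat J_{\mathbf n}=\frac12\sum_{i=1}^N \mathbf n\cdot\hat{\boldsymbol\sigma}^{(i)}$ with $\hat{\boldsymbol\sigma}^{(i)}$ the vector of Pauli matrices of qubit $i$. For $\hat\rho=\sum_k\lambda_k|k\rangle\langle k|$ and Hermitian $\hat A$, the quantum Fisher information is $F_Q[\hat\rho,\hat A]=2\sum_{k,l:\lambda_k+\lambda_l>0}\frac{(\lambda_k-\lambda_l)^2}{\lambda_k+\lambda_l}|\langle k|\hat A|l\rangle|^2$. A partition $\Lambda=\{A_1,\dots,A_{|\Lambda|}\}$ of $\{1,\dots,N\}$ into nonempty disjoint subsets has subset sizes $N_l=|A_l|$ and $\max\Lambda=\max_lN_l$. A state is $\Lambda$-separable if it equals $\sum_\gamma p_\gamma\hat\rho^{(\gamma)}_{A_1}\otimes\cdots\otimes\hat\rho^{(\gamma)}_{A_{|\Lambda|}}$ for a probability distribution $p_\gamma$ and states $\hat\rho^{(\gamma)}_{A_l}$ of the qubits in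 $A_l$. A state has Dyson's rank at most $r$ if it is a convex combination of $\Lambda$-separable states over partitions $\Lambda$ with $\max\Lambda-|\Lambda|\leq r$. *)

theory Defs
  imports Complex_Main "HOL-Library.Disjoint_Sets"
begin

text \<open>Computational basis configurations of the qubits in a set S of labels:
  a basis state is a bit assignment x, with x i = False for i outside S
  (False = |0>, True = |1>).\<close>

type_synonym config = "nat \<Rightarrow> bool"
type_synonym op = "config \<Rightarrow> config \<Rightarrow> complex"

definition cfg :: "nat set \<Rightarrow> config set" where
  "cfg S = {x. \<forall>i. i \<notin> S \<longrightarrow> \<not> x i}"

definition restr :: "nat set \<Rightarrow> config \<Rightarrow> config" where
  "restr A x = (\<lambda>i. if i \<in> A then x i else False)"

definition density_on :: "nat set \<Rightarrow> op \<Rightarrow> bool" where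
  "density_on S \<rho> \<longleftrightarrow>
     (\<forall>x\<in>cfg S. \<forall>y\<in>cfg S. \<rho> y x = cnj (\<rho> x y)) \<and>
     (\<forall>v :: config \<Rightarrow> complex.
        0 \<le> Re (\<Sum>x\<in>cfg S. \<Sum>y\<in>cfg S. cnj (v x) * \<rho> x y * v y)) \<and>
     (\<Sum>x\<in>cfg S. \<rho> x x) = 1"

definition separable_wrt :: "nat \<Rightarrow> nat set set \<Rightarrow> op \<Rightarrow> bool" where
  "separable_wrt N \<Lambda> \<sigma> \<longleftrightarrow>
     (\<exists>(m::nat) (p::nat \<Rightarrow> real) (\<tau>::nat \<Rightarrow> nat set \<Rightarrow> op).
        (\<forall>g<m. 0 \<le> p g) \<and> (\<Sum>g<m. p g) = 1 \<and>
        (\<forall>g<m. \<forall>A\<in>\<Lambda>. density_on A (\<tau> g A)) \<and>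
        (\<forall>x\<in>cfg {1..N}. \<forall>y\<in>cfg {1..N}.
           \<sigma> x y = (\<Sum>g<m. complex_of_real (p g) *
                        (\<Prod>A\<in>\<Lambda>. \<tau> g A (restr A x) (restr A y)))))"

definition dyson_rank_le :: "nat \<Rightarrow> int \<Rightarrow> op \<Rightarrow> bool" where
  "dyson_rank_le N r \<rho> \<longleftrightarrow>
     (\<exists>(m::nat) (p::nat \<Rightarrow> real) (\<Lambda>::nat \<Rightarrow> nat set set) (\<sigma>::nat \<Rightarrow> op).
        (\<forall>j<m. 0 \<le> p j) \<and> (\<Sum>j<m. p j) = 1 \<and>
        (\<forall>j<m. partition_on {1..N} (\<Lambda> j) \<and>
               int (Max (card ` \<Lambda> j)) - int (card (\<Lambda> j)) \<le> r \<and>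
               separable_wrt N (\<Lambda> j) (\<sigma> j)) \<and>
        (\<forall>x\<in>cfg {1..N}. \<forall>y\<in>cfg {1..N}.
           \<rho> x y = (\<Sum>j<m. complex_of_real (p j) * \<sigma> j x y)))"

text \<open>Pauli combination n.sigma for n = (n1,n2,n3) on a single qubit
  (rows/columns: False = |0>, True = |1>), and the collective spin J_n.\<close>
definition pauli_n :: "real \<Rightarrow> real \<Rightarrow> real \<Rightarrow> bool \<Rightarrow> bool \<Rightarrow> complex" where
  "pauli_n n1 n2 n3 a b =
     (if \<not> a \<and> \<not> b then complex_of_real n3
      else if \<not> a \<and> b then Complex n1 (- n2)
      else if a \<and> \<not> b then Complex n1 n2
      else complex_of_real (- n3))"

definition J_op :: "nat \<Rightarrow> real \<Rightarrow> real \<Rightarrow> real \<Rightarrow> op" where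
  "J_op N n1 n2 n3 x y =
     (1/2) * (\<Sum>i\<in>{1..N}. if (\<forall>j. j \<noteq> i \<longrightarrow> x j = y j)
                            then pauli_n n1 n2 n3 (x i) (y i) else 0)"

text \<open>Quantum Fisher information via an orthonormal eigendecomposition
  rho = sum_k lambda_k |e_k><e_k| (eigenvectors indexed by the basis configurations).\<close>
definition eigendecomp :: "nat set \<Rightarrow> op \<Rightarrow> (config \<Rightarrow> config \<Rightarrow> complex) \<Rightarrow> (config \<Rightarrow> real) \<Rightarrow> bool" where
  "eigendecomp S \<rho> e lam \<longleftrightarrow>
     (\<forall>k\<in>cfg S. \<forall>l\<in>cfg S.
        (\<Sum>x\<in>cfg S. cnj (e k x) * e l x) = (if k = l then 1 else 0)) \<and>
     (\<forall>k\<in>cfg S. \<forall>x\<in>cfg S. (\<Sum>y\<in>cfg S. \<rho> x y * e k y) = complex_of_real (lam k) * e k x)"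

definition mat_el :: "nat set \<Rightarrow> (config \<Rightarrow> complex) \<Rightarrow> op \<Rightarrow> (config \<Rightarrow> complex) \<Rightarrow> complex" where
  "mat_el S u A v = (\<Sum>x\<in>cfg S. \<Sum>y\<in>cfg S. cnj (u x) * A x y * v y)"

definition QFI :: "nat set \<Rightarrow> op \<Rightarrow> op \<Rightarrow> real" where
  "QFI S \<rho> A =
     (let (e, lam) = (SOME (e, lam). eigendecomp S \<rho> e lam) in
      2 * (\<Sum>k\<in>cfg S. \<Sum>l\<in>cfg S.
             if lam k + lam l > 0
             then (lam k - lam l)^2 / (lam k + lam l) * (cmod (mat_el S (e k) A (e l)))^2
             else 0))"

end

theory Submission
  imports Defs "Jordan_Normal_Form.Char_Poly" "Jordan_Normal_Form.Determinant"
begin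

definition mmul :: "'a set \<Rightarrow> ('a \<Rightarrow> 'a \<Rightarrow> complex) \<Rightarrow> ('a \<Rightarrow> 'a \<Rightarrow> complex) \<Rightarrow> 'a \<Rightarrow> 'a \<Rightarrow> complex" where
  "mmul C X Y = (\<lambda>x z. \<Sum>y\<in>C. X x y * Y y z)"

definition madj :: "('a \<Rightarrow> 'a \<Rightarrow> complex) \<Rightarrow> 'a \<Rightarrow> 'a \<Rightarrow> complex" where
  "madj X = (\<lambda>x y. cnj (X y x))"

definition idm :: "'a \<Rightarrow> 'a \<Rightarrow> complex" where
  "idm = (\<lambda>x y. if x = y then 1 else 0)"

lemma left_right_inv:
  assumes fin: "finite C" and XY: "\<forall>x\<in>C. \<forall>y\<in>C. mmul C X Y x y = idm x y"
  shows "\<forall>x\<in>C. \<forall>y\<in>C. mmul C Y X x y = idm x y"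
proof -
  obtain g where g: "bij_betw g {0..<card C} C" using ex_bij_betw_nat_finite[OF fin] by blast
  define n where "n = card C"
  have g': "bij_betw g {0..<n} C" using g n_def by simp
  have gin: "\<And>i. i < n \<Longrightarrow> g i \<in> C" using g' by (auto simp: bij_betw_def)
  have ginj: "\<And>i j. i < n \<Longrightarrow> j < n \<Longrightarrow> g i = g j \<longleftrightarrow> i = j"
    using g' by (auto simp: bij_betw_def inj_on_def)
  have reidx: "\<And>f. (\<Sum>l\<in>{0..<n}. f (g l)) = (\<Sum>y\<in>C. f y)"
    using sum.reindex_bij_betw[OF g'] by blast
  define XM where "XM = mat n n (\<lambda>(i,j). X (g i) (g j))"
  define YM where "YM = mat n n (\<lambda>(i,j). Y (g i) (g j))"
  have XMc: "XM \<in> carrier_mat n n" and YMc: "YM \<in> carrier_mat n n" by (auto simp: XM_def YM_def)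
  have "XM * YM = 1\<^sub>m n"
  proof (rule eq_matI)
    fix i j assume i: "i < dim_row (1\<^sub>m n :: complex mat)" and j: "j < dim_col (1\<^sub>m n :: complex mat)"
    hence i': "i < n" and j': "j < n" by auto
    have "(XM * YM) $$ (i,j) = (\<Sum>l\<in>{0..<n}. X (g i) (g l) * Y (g l) (g j))"
      using i' j' by (simp add: XM_def YM_def scalar_prod_def)
    also have "\<dots> = mmul C X Y (g i) (g j)" unfolding mmul_def using reidx[of "\<lambda>y. X (g i) y * Y y (g j)"] by simp
    also have "\<dots> = (if i = j then 1 else 0)" using XY gin[OF i'] gin[OF j'] ginj[OF i' j'] by (simp add: idm_def)
    finally show "(XM * YM) $$ (i,j) = 1\<^sub>m n $$ (i,j)" using i' j' by simp
  qed (auto simp: XM_def YM_def)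
  hence YX: "YM * XM = 1\<^sub>m n" using mat_mult_left_right_inverse[OF XMc YMc] by blast
  show ?thesis
  proof (intro ballI)
    fix x y assume x: "x \<in> C" and y: "y \<in> C"
    obtain i where i: "i < n" "g i = x" using g' x by (auto simp: bij_betw_def image_iff)
    obtain j where j: "j < n" "g j = y" using g' y by (auto simp: bij_betw_def image_iff)
    have "mmul C Y X x y = (\<Sum>l\<in>{0..<n}. Y (g i) (g l) * X (g l) (g j))"
      unfolding mmul_def using reidx[of "\<lambda>z. Y (g i) z * X z (g j)"] i j by simp
    also have "\<dots> = (YM * XM) $$ (i,j)" using i j by (simp add: XM_def YM_def scalar_prod_def)
    also have "\<dots> = (if i = j then 1 else 0)" using YX i j by simp
    also have "\<dots> = idm x y" using ginj[OF i(1) j(1)] i j by (simp add: idm_def)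
    finally show "mmul C Y X x y = idm x y" .
  qed
qed

lemma exists_eigvec:
  fixes M :: "'a \<Rightarrow> 'a \<Rightarrow> complex"
  assumes fin: "finite D" and ne: "D \<noteq> {}"
  shows "\<exists>c \<mu>. (\<exists>i\<in>D. c i \<noteq> 0) \<and> (\<forall>i\<in>D. (\<Sum>j\<in>D. M i j * c j) = \<mu> * c i)"
proof -
  obtain g where g: "bij_betw g {0..<card D} D" using ex_bij_betw_nat_finite[OF fin] by blast
  define n where "n = card D"
  have n1: "n \<ge> 1" using fin ne n_def by (simp add: Suc_leI card_gt_0_iff)
  have g': "bij_betw g {0..<n} D" using g n_def by simp
  have gin: "\<And>i. i < n \<Longrightarrow> g i \<in> D" using g' by (auto simp: bij_betw_def)
  have reidx: "\<And>f. (\<Sum>l\<in>{0..<n}. f (g l)) = (\<Sum>y\<in>D. f y)"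
    using sum.reindex_bij_betw[OF g'] by blast
  define ginv where "ginv = inv_into {0..<n} g"
  have ginv: "\<And>i. i < n \<Longrightarrow> ginv (g i) = i"
    unfolding ginv_def using g' by (simp add: bij_betw_def)
  define MM where "MM = mat n n (\<lambda>(i,j). M (g i) (g j))"
  have MMc: "MM \<in> carrier_mat n n" by (simp add: MM_def)
  obtain as where as: "char_poly MM = (\<Prod>a\<leftarrow>as. [:- a, 1:])" "length as = n"
    using char_poly_factorized[OF MMc] by blast
  obtain a rest where ar: "as = a # rest" using as(2) n1 by (cases as) auto
  have "poly (char_poly MM) a = 0" unfolding as(1) ar by simp
  hence "eigenvalue MM a" using eigenvalue_root_char_poly[OF MMc] by simp
  hence ev: "eigenvector MM (find_eigenvector MM a) a" using find_eigenvector[OF MMc] by blast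
  define v where "v = find_eigenvector MM a"
  have vc: "v \<in> carrier_vec n" and v0: "v \<noteq> 0\<^sub>v n" and vev: "MM *\<^sub>v v = a \<cdot>\<^sub>v v"
    using ev MMc unfolding eigenvector_def v_def by auto
  have "\<exists>i0<n. v $ i0 \<noteq> 0"
  proof (rule ccontr)
    assume "\<not> (\<exists>i0<n. v $ i0 \<noteq> 0)"
    hence "v = 0\<^sub>v n" using vc by (intro eq_vecI) auto
    thus False using v0 by simp
  qed
  then obtain i0 where i0: "i0 < n" "v $ i0 \<noteq> 0" by blast
  define c where "c = (\<lambda>x. v $ (ginv x))"
  show ?thesis
  proof (intro exI conjI)
    show "\<exists>i\<in>D. c i \<noteq> 0" using i0 gin[OF i0(1)] ginv[OF i0(1)] unfolding c_def by (intro bexI[of _ "g i0"]) auto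
    show "\<forall>i\<in>D. (\<Sum>j\<in>D. M i j * c j) = a * c i"
    proof
      fix x assume x: "x \<in> D"
      obtain i where i: "i < n" "g i = x" using g' x by (auto simp: bij_betw_def image_iff)
      have "(\<Sum>j\<in>D. M x j * c j) = (\<Sum>l\<in>{0..<n}. M (g i) (g l) * v $ l)"
        using reidx[of "\<lambda>j. M (g i) j * c j"] i ginv unfolding c_def by simp
      also have "\<dots> = (MM *\<^sub>v v) $ i" using i vc by (simp add: MM_def scalar_prod_def)
      also have "\<dots> = a * c x" using vev i vc ginv[OF i(1)] unfolding c_def by auto
      finally show "(\<Sum>j\<in>D. M x j * c j) = a * c x" .
    qed
  qed
qed

definition mvec :: "'a set \<Rightarrow> ('a \<Rightarrow> 'a \<Rightarrow> complex) \<Rightarrow> ('a \<Rightarrow> complex) \<Rightarrow> 'a \<Rightarrow> complex" where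
  "mvec C X v = (\<lambda>x. \<Sum>y\<in>C. X x y * v y)"

definition ip :: "'a set \<Rightarrow> ('a \<Rightarrow> complex) \<Rightarrow> ('a \<Rightarrow> complex) \<Rightarrow> complex" where
  "ip C u v = (\<Sum>x\<in>C. cnj (u x) * v x)"

lemma mmul_assoc: "mmul C (mmul C X Y) Z = mmul C X (mmul C Y Z)"
proof (intro ext)
  fix x z
  have "mmul C (mmul C X Y) Z x z = (\<Sum>w\<in>C. \<Sum>y\<in>C. X x y * Y y w * Z w z)"
    by (simp add: mmul_def sum_distrib_right)
  also have "\<dots> = (\<Sum>y\<in>C. \<Sum>w\<in>C. X x y * Y y w * Z w z)" by (rule sum.swap)
  also have "\<dots> = mmul C X (mmul C Y Z) x z" by (simp add: mmul_def sum_distrib_left mult.assoc)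
  finally show "mmul C (mmul C X Y) Z x z = mmul C X (mmul C Y Z) x z" .
qed

lemma mvec_mmul: "mvec C (mmul C X Y) v = mvec C X (mvec C Y v)"
proof (intro ext)
  fix x
  have "mvec C (mmul C X Y) v x = (\<Sum>w\<in>C. \<Sum>y\<in>C. X x y * Y y w * v w)"
    by (simp add: mvec_def mmul_def sum_distrib_right)
  also have "\<dots> = (\<Sum>y\<in>C. \<Sum>w\<in>C. X x y * Y y w * v w)" by (rule sum.swap)
  also have "\<dots> = mvec C X (mvec C Y v) x" by (simp add: mvec_def sum_distrib_left mult.assoc)
  finally show "mvec C (mmul C X Y) v x = mvec C X (mvec C Y v) x" .
qed

lemma madj_mmul: "madj (mmul C X Y) = mmul C (madj Y) (madj X)"
  by (simp add: madj_def mmul_def mult.commute fun_eq_iff)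

lemma madj_madj[simp]: "madj (madj X) = X"
  by (simp add: madj_def fun_eq_iff)

lemma idm_mult: "idm x y * a = (if x = y then a else 0)" "a * idm x y = (if x = y then a else 0)"
  by (simp_all add: idm_def)

lemma mmul_idm_left: "x \<in> C \<Longrightarrow> finite C \<Longrightarrow> mmul C idm X x z = X x z"
  by (simp add: mmul_def idm_mult)

lemma mmul_idm_right: "z \<in> C \<Longrightarrow> finite C \<Longrightarrow> mmul C X idm x z = X x z"
  by (simp add: mmul_def idm_mult)

lemma mvec_idm: "x \<in> C \<Longrightarrow> finite C \<Longrightarrow> mvec C idm v x = v x"
  by (simp add: mvec_def idm_mult)

lemma mmul_cong_right: "(\<forall>y\<in>C. X y z = X' y z) \<Longrightarrow> mmul C Y X x z = mmul C Y X' x z"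
  by (simp add: mmul_def)

lemma mmul_cong_left: "(\<forall>y\<in>C. Y x y = Y' x y) \<Longrightarrow> mmul C Y X x z = mmul C Y' X x z"
  by (simp add: mmul_def)

lemma mvec_cong: "(\<forall>y\<in>C. X x y = X' x y) \<Longrightarrow> (\<forall>y\<in>C. v y = v' y) \<Longrightarrow> mvec C X v x = mvec C X' v' x"
  by (simp add: mvec_def)

lemma ip_self_real: "ip C u u = complex_of_real (\<Sum>x\<in>C. (cmod (u x))^2)"
  unfolding ip_def by (simp add: complex_norm_square mult.commute del: of_real_power)

lemma ip_self_pos: "finite C \<Longrightarrow> x \<in> C \<Longrightarrow> u x \<noteq> 0 \<Longrightarrow> (\<Sum>x\<in>C. (cmod (u x))^2) > 0"
  by (rule sum_pos2[of C x]) auto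

lemma ip_diff_left: "ip C (\<lambda>x. f x - g x) v = ip C f v - ip C g v"
  by (simp add: ip_def algebra_simps sum_subtractf)
lemma ip_diff_right: "ip C u (\<lambda>x. f x - g x) = ip C u f - ip C u g"
  by (simp add: ip_def algebra_simps sum_subtractf)
lemma ip_smult_left: "ip C (\<lambda>x. b * f x) v = cnj b * ip C f v"
  by (simp add: ip_def algebra_simps sum_distrib_left)
lemma ip_smult_right: "ip C u (\<lambda>x. b * f x) = b * ip C u f"
  by (simp add: ip_def algebra_simps sum_distrib_left)
lemma ip_conj: "cnj (ip C u v) = ip C v u"
  by (simp add: ip_def mult.commute)
lemma ip_madj_mvec: "ip C (\<lambda>x. U x k) w = mvec C (madj U) w k"
  by (simp add: ip_def mvec_def madj_def)
lemma ip_cols: "ip C (\<lambda>x. U x k) (\<lambda>x. U x j) = mmul C (madj U) U k j"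
  by (simp add: ip_def mmul_def madj_def)

lemma spectral_step:
  fixes H U :: "'a \<Rightarrow> 'a \<Rightarrow> complex" and lam :: "'a \<Rightarrow> real"
  assumes fin: "finite C" and herm: "\<forall>x\<in>C. \<forall>y\<in>C. H y x = cnj (H x y)"
   and u1: "\<forall>x\<in>C. \<forall>y\<in>C. mmul C (madj U) U x y = idm x y"
   and u2: "\<forall>x\<in>C. \<forall>y\<in>C. mmul C U (madj U) x y = idm x y"
   and K: "K \<subseteq> C" and k0: "k0 \<in> C" "k0 \<notin> K"
   and ev: "\<forall>k\<in>K. \<forall>x\<in>C. mvec C H (\<lambda>y. U y k) x = complex_of_real (lam k) * U x k"
  shows "\<exists>U' lam'. (\<forall>x\<in>C. \<forall>y\<in>C. mmul C (madj U') U' x y = idm x y) \<and>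
     (\<forall>x\<in>C. \<forall>y\<in>C. mmul C U' (madj U') x y = idm x y) \<and>
     (\<forall>k\<in>insert k0 K. \<forall>x\<in>C. mvec C H (\<lambda>y. U' y k) x = complex_of_real (lam' k) * U' x k)"
proof -
  define T where "T = mmul C (madj U) (mmul C H U)"
  have Trow: "T k j = complex_of_real (lam k) * idm k j" if k: "k \<in> K" and j: "j \<in> C" for k j
  proof -
    have "T k j = (\<Sum>x\<in>C. \<Sum>y\<in>C. cnj (U x k) * H x y * U y j)"
      by (simp add: T_def mmul_def madj_def sum_distrib_left mult.assoc)
    also have "\<dots> = (\<Sum>y\<in>C. \<Sum>x\<in>C. cnj (U x k) * H x y * U y j)" by (rule sum.swap)
    also have "\<dots> = (\<Sum>y\<in>C. (\<Sum>x\<in>C. cnj (U x k) * H x y) * U y j)"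
      by (simp add: sum_distrib_right)
    also have "\<dots> = (\<Sum>y\<in>C. complex_of_real (lam k) * cnj (U y k) * U y j)"
    proof (rule sum.cong[OF refl])
      fix y assume y: "y \<in> C"
      have "(\<Sum>x\<in>C. cnj (U x k) * H x y) = (\<Sum>x\<in>C. cnj (H y x * U x k))"
      proof (rule sum.cong[OF refl])
        fix x assume x: "x \<in> C"
        have "H x y = cnj (H y x)" using herm x y by (metis complex_cnj_cnj)
        thus "cnj (U x k) * H x y = cnj (H y x * U x k)" by (simp add: mult.commute)
      qed
      also have "\<dots> = cnj (\<Sum>x\<in>C. H y x * U x k)" by simp
      also have "\<dots> = cnj (complex_of_real (lam k) * U y k)"
        using ev k y by (simp add: mvec_def)
      finally show "(\<Sum>x\<in>C. cnj (U x k) * H x y) * U y j = complex_of_real (lam k) * cnj (U y k) * U y j"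
        by simp
    qed
    also have "\<dots> = complex_of_real (lam k) * mmul C (madj U) U k j"
      by (simp add: mmul_def madj_def sum_distrib_left mult.assoc)
    also have "\<dots> = complex_of_real (lam k) * idm k j" using u1 k K j by auto
    finally show ?thesis .
  qed
  define D where "D = C - K"
  have finD: "finite D" using fin by (simp add: D_def)
  have Dne: "D \<noteq> {}" using k0 by (auto simp: D_def)
  obtain c \<mu> where c0: "\<exists>i\<in>D. c i \<noteq> 0" and cev: "\<forall>i\<in>D. (\<Sum>j\<in>D. T i j * c j) = \<mu> * c i"
    using exists_eigvec[OF finD Dne, of T] by blast
  define ch where "ch = (\<lambda>j. if j \<in> D then c j else 0)"
  have sumD: "(\<Sum>j\<in>C. T i j * ch j) = (\<Sum>j\<in>D. T i j * c j)" for i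
  proof -
    have "(\<Sum>j\<in>C. T i j * ch j) = (\<Sum>j\<in>C. if j \<in> D then T i j * c j else 0)"
      by (rule sum.cong) (auto simp: ch_def)
    also have "\<dots> = (\<Sum>j\<in>{j\<in>C. j \<in> D}. T i j * c j)" using fin by (simp add: sum.inter_filter)
    also have "{j\<in>C. j \<in> D} = D" by (auto simp: D_def)
    finally show ?thesis .
  qed
  have Tch: "mvec C T ch i = \<mu> * ch i" if i: "i \<in> C" for i
  proof (cases "i \<in> D")
    case True
    thus ?thesis using cev sumD[of i] by (simp add: mvec_def ch_def)
  next
    case False
    hence iK: "i \<in> K" using i by (auto simp: D_def)
    have "(\<Sum>j\<in>D. T i j * c j) = 0"
    proof (rule sum.neutral, intro ballI)
      fix j assume j: "j \<in> D"
      hence "j \<noteq> i" using False by auto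
      thus "T i j * c j = 0" using Trow[OF iK] j by (auto simp: D_def idm_def)
    qed
    thus ?thesis using sumD[of i] False by (simp add: mvec_def ch_def)
  qed
  define w where "w = mvec C U ch"
  have HU: "mmul C H U x j = mmul C U T x j" if x: "x \<in> C" and j: "j \<in> C" for x j
  proof -
    have "mmul C U T x j = mmul C (mmul C U (madj U)) (mmul C H U) x j"
      by (simp add: T_def mmul_assoc)
    also have "\<dots> = mmul C idm (mmul C H U) x j"
      by (rule mmul_cong_left) (use u2 x in auto)
    also have "\<dots> = mmul C H U x j" using mmul_idm_left[OF x fin] .
    finally show ?thesis by simp
  qed
  have Hw: "mvec C H w x = \<mu> * w x" if x: "x \<in> C" for x
  proof -
    have "mvec C H w x = mvec C (mmul C H U) ch x" by (simp add: w_def mvec_mmul)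
    also have "\<dots> = mvec C (mmul C U T) ch x"
      by (rule mvec_cong) (use HU x in auto)
    also have "\<dots> = mvec C U (mvec C T ch) x" by (simp add: mvec_mmul)
    also have "\<dots> = mvec C U (\<lambda>l. \<mu> * ch l) x"
      by (rule mvec_cong) (use Tch in auto)
    also have "\<dots> = \<mu> * w x" by (simp add: mvec_def w_def sum_distrib_left algebra_simps)
    finally show ?thesis .
  qed
  have Uw: "mvec C (madj U) w k = ch k" if k: "k \<in> C" for k
  proof -
    have "mvec C (madj U) w k = mvec C (mmul C (madj U) U) ch k" by (simp add: w_def mvec_mmul)
    also have "\<dots> = mvec C idm ch k" by (rule mvec_cong) (use u1 k in auto)
    also have "\<dots> = ch k" using mvec_idm[OF k fin] .
    finally show ?thesis .
  qed
  have wne: "\<exists>x\<in>C. w x \<noteq> 0"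
  proof (rule ccontr)
    assume "\<not> (\<exists>x\<in>C. w x \<noteq> 0)"
    hence w0: "\<forall>x\<in>C. w x = 0" by auto
    obtain i where i: "i \<in> D" "c i \<noteq> 0" using c0 by blast
    have iC: "i \<in> C" using i by (auto simp: D_def)
    have "mvec C (madj U) w i = 0" using w0 by (simp add: mvec_def)
    thus False using Uw[OF iC] i by (simp add: ch_def)
  qed
  define p where "p = (\<Sum>x\<in>C. (cmod (w x))^2)"
  have ppos: "p > 0" using wne ip_self_pos[OF fin] unfolding p_def by blast
  have ipww: "ip C w w = complex_of_real p" using ip_self_real p_def by blast
  have ipHw: "ip C w (mvec C H w) = \<mu> * complex_of_real p"
  proof -
    have "ip C w (mvec C H w) = ip C w (\<lambda>x. \<mu> * w x)" unfolding ip_def using Hw by simp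
    thus ?thesis using ipww ip_smult_right by metis
  qed
  have ipHw_real: "cnj (ip C w (mvec C H w)) = ip C w (mvec C H w)"
  proof -
    have "cnj (ip C w (mvec C H w)) = (\<Sum>x\<in>C. \<Sum>y\<in>C. w x * cnj (H x y) * cnj (w y))"
      by (simp add: ip_def mvec_def sum_distrib_left mult.assoc)
    also have "\<dots> = (\<Sum>x\<in>C. \<Sum>y\<in>C. w x * H y x * cnj (w y))"
    proof (intro sum.cong refl)
      fix x y assume x: "x \<in> C" and y: "y \<in> C"
      have "cnj (H x y) = H y x" using herm x y by metis
      thus "w x * cnj (H x y) * cnj (w y) = w x * H y x * cnj (w y)" by simp
    qed
    also have "\<dots> = (\<Sum>y\<in>C. \<Sum>x\<in>C. w x * H y x * cnj (w y))" by (rule sum.swap)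
    also have "\<dots> = ip C w (mvec C H w)"
      by (simp add: ip_def mvec_def sum_distrib_left algebra_simps)
    finally show ?thesis .
  qed
  define \<nu> where "\<nu> = Re \<mu>"
  have mureal: "\<mu> = complex_of_real \<nu>"
  proof -
    have "cnj (\<mu> * complex_of_real p) = \<mu> * complex_of_real p" using ipHw ipHw_real by metis
    hence "cnj \<mu> * complex_of_real p = \<mu> * complex_of_real p" by simp
    hence "cnj \<mu> = \<mu>" using ppos by simp
    thus ?thesis unfolding \<nu>_def by (metis Reals_cnj_iff complex_is_Real_iff of_real_Re)
  qed
  define s where "s = complex_of_real (1 / sqrt p)"
  define w' where "w' = (\<lambda>x. s * w x)"
  have ipw'w': "ip C w' w' = 1"
  proof -
    have "ip C w' w' = cnj s * s * ip C w w" unfolding w'_def by (simp add: ip_smult_left ip_smult_right)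
    also have "\<dots> = complex_of_real ((1 / sqrt p) * (1 / sqrt p) * p)" unfolding ipww s_def complex_cnj_complex_of_real of_real_mult by (rule refl)
    also have "(1 / sqrt p) * (1 / sqrt p) * p = 1" using ppos
    proof -
      have "sqrt p * sqrt p = p" using ppos by (metis less_eq_real_def real_sqrt_mult_self real_sqrt_abs abs_of_nonneg real_sqrt_mult)
      thus ?thesis using ppos by (simp add: field_simps)
    qed
    finally show ?thesis by simp
  qed
  have Hw': "mvec C H w' x = complex_of_real \<nu> * w' x" if x: "x \<in> C" for x
  proof -
    have "mvec C H w' x = s * mvec C H w x" by (simp add: mvec_def w'_def sum_distrib_left algebra_simps)
    thus ?thesis using Hw[OF x] mureal by (simp add: w'_def)
  qed
  have Kw': "ip C (\<lambda>x. U x k) w' = 0" if k: "k \<in> K" for k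
  proof -
    have kC: "k \<in> C" using k K by auto
    have "ip C (\<lambda>x. U x k) w = ch k" using Uw[OF kC] ip_madj_mvec by metis
    also have "\<dots> = 0" using k by (simp add: ch_def D_def)
    finally show ?thesis unfolding w'_def by (simp add: ip_smult_right)
  qed
  define a where "a = (\<lambda>x. U x k0)"
  define z where "z = ip C w' a"
  define \<beta> where "\<beta> = (if z = 0 then 1 else z / complex_of_real (cmod z))"
  define b where "b = (\<lambda>x. \<beta> * w' x)"
  have zz: "cnj z * z = complex_of_real (cmod z) * complex_of_real (cmod z)"
    by (metis complex_norm_square mult.commute of_real_mult power2_eq_square)
  have beta1: "cnj \<beta> * \<beta> = 1"
  proof (cases "z = 0")
    case True thus ?thesis by (simp add: \<beta>_def)
  next
    case False
    hence "cmod z \<noteq> 0" by simp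
    have "cnj \<beta> * \<beta> = (cnj z * z) / (complex_of_real (cmod z) * complex_of_real (cmod z))"
      using False by (simp add: \<beta>_def)
    thus ?thesis using zz False by simp
  qed
  define t where "t = cmod z"
  have ipbb: "ip C b b = 1" unfolding b_def using ipw'w' beta1
    by (simp add: ip_smult_left ip_smult_right mult.assoc[symmetric])
  have ipba: "ip C b a = complex_of_real t"
  proof (cases "z = 0")
    case True thus ?thesis by (simp add: b_def ip_smult_left \<beta>_def t_def z_def[symmetric])
  next
    case False
    have "ip C b a = cnj \<beta> * z" by (simp add: b_def ip_smult_left z_def)
    also have "\<dots> = cnj z * z / complex_of_real (cmod z)" using False by (simp add: \<beta>_def)
    also have "\<dots> = complex_of_real t" using zz False by (simp add: t_def)
    finally show ?thesis .
  qed
  have ipab: "ip C a b = complex_of_real t" using ipba ip_conj by (metis complex_cnj_complex_of_real)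
  have ipaa: "ip C a a = 1" using u1 k0 unfolding a_def ip_cols by (simp add: idm_def)
  have Ka: "ip C (\<lambda>x. U x k) a = 0" if k: "k \<in> K" for k
  proof -
    have "k \<noteq> k0" using k k0 by auto
    thus ?thesis using u1 k K k0 unfolding a_def ip_cols by (auto simp: idm_def)
  qed
  have Kb: "ip C (\<lambda>x. U x k) b = 0" if k: "k \<in> K" for k
    using Kw'[OF k] unfolding b_def by (simp add: ip_smult_right)
  have Hb: "mvec C H b x = complex_of_real \<nu> * b x" if x: "x \<in> C" for x
  proof -
    have "mvec C H b x = \<beta> * mvec C H w' x" by (simp add: mvec_def b_def sum_distrib_left algebra_simps)
    thus ?thesis using Hw'[OF x] by (simp add: b_def)
  qed
  define lam' where "lam' = lam(k0 := \<nu>)"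
  show ?thesis
  proof (cases "\<forall>x\<in>C. a x = b x")
    case True
    show ?thesis
    proof (intro exI[of _ U] exI[of _ lam'] conjI)
      show "\<forall>x\<in>C. \<forall>y\<in>C. mmul C (madj U) U x y = idm x y" by fact
      show "\<forall>x\<in>C. \<forall>y\<in>C. mmul C U (madj U) x y = idm x y" by fact
      show "\<forall>k\<in>insert k0 K. \<forall>x\<in>C. mvec C H (\<lambda>y. U y k) x = complex_of_real (lam' k) * U x k"
      proof (intro ballI)
        fix k x assume k: "k \<in> insert k0 K" and x: "x \<in> C"
        show "mvec C H (\<lambda>y. U y k) x = complex_of_real (lam' k) * U x k"
        proof (cases "k = k0")
          case True
          have "mvec C H (\<lambda>y. U y k) x = mvec C H b x"
            using \<open>\<forall>x\<in>C. a x = b x\<close> \<open>k = k0\<close> unfolding a_def by (intro mvec_cong) auto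
          thus ?thesis using Hb[OF x] \<open>\<forall>x\<in>C. a x = b x\<close> x True by (simp add: lam'_def a_def)
        next
          case False
          hence "k \<in> K" using k by auto
          thus ?thesis using ev x False by (simp add: lam'_def)
        qed
      qed
    qed
  next
    case False
    define u where "u = (\<lambda>x. a x - b x)"
    define q where "q = (\<Sum>x\<in>C. (cmod (u x))^2)"
    have qpos: "q > 0" using False ip_self_pos[OF fin, of _ u] unfolding q_def u_def by auto
    have ipuu: "ip C u u = complex_of_real q" using ip_self_real q_def by blast
    have ipuu2: "ip C u u = 2 - 2 * complex_of_real t"
      unfolding u_def by (simp add: ip_diff_left ip_diff_right ipaa ipab ipba ipbb)
    have t1: "1 - complex_of_real t \<noteq> 0" using qpos ipuu ipuu2 by auto
    define sc where "sc = complex_of_real (2 / q)"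
    define R where "R = (\<lambda>x y. idm x y - sc * u x * cnj (u y))"
    have madjR: "madj R = R" by (simp add: R_def madj_def sc_def idm_def fun_eq_iff mult.commute mult.left_commute)
    have RR: "mmul C R R x y = idm x y" if x: "x \<in> C" and y: "y \<in> C" for x y
    proof -
      have "mmul C R R x y = (\<Sum>z\<in>C. idm x z * idm z y) - sc * u x * (\<Sum>z\<in>C. cnj (u z) * idm z y)
           - sc * cnj (u y) * (\<Sum>z\<in>C. idm x z * u z) + sc * sc * u x * cnj (u y) * ip C u u"
        by (simp add: mmul_def R_def ip_def algebra_simps sum_subtractf sum.distrib sum_distrib_left)
      also have "\<dots> = idm x y - sc * u x * cnj (u y) - sc * cnj (u y) * u x + sc * sc * u x * cnj (u y) * complex_of_real q"
        using x y fin by (simp add: idm_mult ipuu)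
      also have "\<dots> = idm x y" using qpos by (simp add: sc_def field_simps)
      finally show ?thesis .
    qed
    define U' where "U' = mmul C R U"
    have col: "U' x k = U x k - sc * u x * ip C u (\<lambda>y. U y k)" if x: "x \<in> C" and k: "k \<in> C" for x k
      using x fin by (simp add: U'_def mmul_def R_def ip_def algebra_simps sum_subtractf sum_distrib_left idm_mult)
    have colK: "U' x k = U x k" if x: "x \<in> C" and k: "k \<in> K" for x k
    proof -
      have "ip C u (\<lambda>y. U y k) = 0"
        using Ka[OF k] Kb[OF k] ip_conj unfolding u_def ip_diff_left by (metis complex_cnj_zero diff_self)
      thus ?thesis using col[OF x] k K by auto
    qed
    have colk0: "U' x k0 = b x" if x: "x \<in> C" for x
    proof -
      have "ip C u (\<lambda>y. U y k0) = 1 - complex_of_real t"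
        unfolding u_def a_def[symmetric] by (simp add: ip_diff_left ipaa ipba)
      hence "U' x k0 = a x - sc * u x * (1 - complex_of_real t)" using col[OF x k0(1)] by (simp add: a_def)
      also have "\<dots> = a x - u x * (sc * (1 - complex_of_real t))"
        by (simp add: ac_simps)
      also have "sc * (1 - complex_of_real t) = 1"
        using ipuu ipuu2 t1 qpos unfolding sc_def by (simp add: field_simps)
      also have "a x - u x * 1 = b x" by (simp add: u_def)
      finally show ?thesis .
    qed
    show ?thesis
    proof (intro exI[of _ U'] exI[of _ lam'] conjI)
      show "\<forall>x\<in>C. \<forall>y\<in>C. mmul C (madj U') U' x y = idm x y"
      proof (intro ballI)
        fix x y assume x: "x \<in> C" and y: "y \<in> C"
        have "mmul C (madj U') U' x y = mmul C (madj U) (mmul C (mmul C R R) U) x y"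
          unfolding U'_def madj_mmul madjR by (simp add: mmul_assoc)
        also have "\<dots> = mmul C (madj U) U x y"
        proof (rule mmul_cong_right, intro ballI)
          fix z assume z: "z \<in> C"
          have "mmul C (mmul C R R) U z y = mmul C idm U z y"
            by (rule mmul_cong_left) (use RR z in auto)
          thus "mmul C (mmul C R R) U z y = U z y" using mmul_idm_left[OF z fin] by simp
        qed
        also have "\<dots> = idm x y" using u1 x y by auto
        finally show "mmul C (madj U') U' x y = idm x y" .
      qed
      show "\<forall>x\<in>C. \<forall>y\<in>C. mmul C U' (madj U') x y = idm x y"
      proof (intro ballI)
        fix x y assume x: "x \<in> C" and y: "y \<in> C"
        have "mmul C U' (madj U') x y = mmul C R (mmul C (mmul C U (madj U)) R) x y"
          unfolding U'_def madj_mmul madjR by (simp add: mmul_assoc)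
        also have "\<dots> = mmul C R R x y"
        proof (rule mmul_cong_right, intro ballI)
          fix z assume z: "z \<in> C"
          have "mmul C (mmul C U (madj U)) R z y = mmul C idm R z y"
            by (rule mmul_cong_left) (use u2 z in auto)
          thus "mmul C (mmul C U (madj U)) R z y = R z y" using mmul_idm_left[OF z fin] by simp
        qed
        also have "\<dots> = idm x y" using RR x y by auto
        finally show "mmul C U' (madj U') x y = idm x y" .
      qed
      show "\<forall>k\<in>insert k0 K. \<forall>x\<in>C. mvec C H (\<lambda>y. U' y k) x = complex_of_real (lam' k) * U' x k"
      proof (intro ballI)
        fix k x assume k: "k \<in> insert k0 K" and x: "x \<in> C"
        show "mvec C H (\<lambda>y. U' y k) x = complex_of_real (lam' k) * U' x k"
        proof (cases "k = k0")
          case True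
          have "mvec C H (\<lambda>y. U' y k) x = mvec C H b x"
            using colk0 True by (intro mvec_cong) auto
          thus ?thesis using Hb[OF x] colk0[OF x] True by (simp add: lam'_def)
        next
          case False
          hence kK: "k \<in> K" using k by auto
          have "mvec C H (\<lambda>y. U' y k) x = mvec C H (\<lambda>y. U y k) x"
            using colK kK by (intro mvec_cong) auto
          thus ?thesis using ev kK x False colK[OF x kK] by (simp add: lam'_def)
        qed
      qed
    qed
  qed
qed


lemma spectral:
  fixes H :: "'a \<Rightarrow> 'a \<Rightarrow> complex"
  assumes fin: "finite C" and herm: "\<forall>x\<in>C. \<forall>y\<in>C. H y x = cnj (H x y)"
  shows "\<exists>U lam. (\<forall>x\<in>C. \<forall>y\<in>C. mmul C (madj U) U x y = idm x y) \<and>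
     (\<forall>x\<in>C. \<forall>y\<in>C. mmul C U (madj U) x y = idm x y) \<and>
     (\<forall>k\<in>C. \<forall>x\<in>C. mvec C H (\<lambda>y. U y k) x = complex_of_real (lam k) * U x k)"
proof -
  have main: "\<exists>U lam. (\<forall>x\<in>C. \<forall>y\<in>C. mmul C (madj U) U x y = idm x y) \<and>
     (\<forall>x\<in>C. \<forall>y\<in>C. mmul C U (madj U) x y = idm x y) \<and>
     (\<forall>k\<in>K. \<forall>x\<in>C. mvec C H (\<lambda>y. U y k) x = complex_of_real (lam k) * U x k)"
    if "finite K" "K \<subseteq> C" for K
    using that
  proof (induction K rule: finite_induct)
    case empty
    have madj_idm: "madj idm = (idm :: 'a \<Rightarrow> 'a \<Rightarrow> complex)" by (simp add: madj_def idm_def fun_eq_iff)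
    have "\<forall>x\<in>C. \<forall>y\<in>C. mmul C idm idm x y = (idm x y :: complex)"
      using mmul_idm_left[OF _ fin] by blast
    thus ?case using madj_idm by (intro exI[of _ idm] exI[of _ "\<lambda>_. 0"]) auto
  next
    case (insert k0 K)
    hence KC: "K \<subseteq> C" and k0C: "k0 \<in> C" by auto
    from insert(3)[OF KC] obtain U lam where "\<forall>x\<in>C. \<forall>y\<in>C. mmul C (madj U) U x y = idm x y"
      "\<forall>x\<in>C. \<forall>y\<in>C. mmul C U (madj U) x y = idm x y"
      "\<forall>k\<in>K. \<forall>x\<in>C. mvec C H (\<lambda>y. U y k) x = complex_of_real (lam k) * U x k" by blast
    from spectral_step[OF fin herm this(1,2) KC k0C insert(2) this(3)] show ?case .
  qed
  show ?thesis using main[OF fin] by blast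
qed

definition mtr :: "'a set \<Rightarrow> ('a \<Rightarrow> 'a \<Rightarrow> complex) \<Rightarrow> complex" where
  "mtr C Z = (\<Sum>x\<in>C. Z x x)"

lemma mmul_lin_left: "mmul C (\<lambda>x y. a * P x y + b * Q x y) R = (\<lambda>x z. a * mmul C P R x z + b * mmul C Q R x z)"
  by (simp add: mmul_def fun_eq_iff sum.distrib sum_distrib_left algebra_simps)
lemma mmul_lin_right: "mmul C R (\<lambda>x y. a * P x y + b * Q x y) = (\<lambda>x z. a * mmul C R P x z + b * mmul C R Q x z)"
  by (simp add: mmul_def fun_eq_iff sum.distrib sum_distrib_left algebra_simps)
lemma mmul_diff_left: "mmul C (\<lambda>x y. P x y - Q x y) R = (\<lambda>x z. mmul C P R x z - mmul C Q R x z)"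
  by (simp add: mmul_def fun_eq_iff sum_subtractf algebra_simps)
lemma mmul_diff_right: "mmul C R (\<lambda>x y. P x y - Q x y) = (\<lambda>x z. mmul C R P x z - mmul C R Q x z)"
  by (simp add: mmul_def fun_eq_iff sum_subtractf algebra_simps)
lemma mmul_add_left: "mmul C (\<lambda>x y. P x y + Q x y) R = (\<lambda>x z. mmul C P R x z + mmul C Q R x z)"
  by (simp add: mmul_def fun_eq_iff sum.distrib algebra_simps)
lemma mmul_add_right: "mmul C R (\<lambda>x y. P x y + Q x y) = (\<lambda>x z. mmul C R P x z + mmul C R Q x z)"
  by (simp add: mmul_def fun_eq_iff sum.distrib algebra_simps)
lemma mmul_smult_left: "mmul C (\<lambda>x y. a * P x y) R = (\<lambda>x z. a * mmul C P R x z)"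
  by (simp add: mmul_def fun_eq_iff sum_distrib_left algebra_simps)
lemma mmul_smult_right: "mmul C R (\<lambda>x y. a * P x y) = (\<lambda>x z. a * mmul C R P x z)"
  by (simp add: mmul_def fun_eq_iff sum_distrib_left algebra_simps)

lemma mtr_cong: "(\<forall>x\<in>C. \<forall>y\<in>C. Y x y = Y' x y) \<Longrightarrow> mtr C (mmul C S Y) = mtr C (mmul C S Y')"
  by (simp add: mtr_def mmul_def)

lemma mtr_diff: "mtr C (mmul C S (\<lambda>x y. P x y - Q x y)) = mtr C (mmul C S P) - mtr C (mmul C S Q)"
  by (simp add: mtr_def mmul_diff_right sum_subtractf)

lemma psd_mtr:
  assumes psd: "\<forall>v. 0 \<le> Re (\<Sum>x\<in>C. \<Sum>y\<in>C. cnj (v x) * S x y * v y)"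
  shows "0 \<le> Re (mtr C (mmul C S (mmul C M (madj M))))"
proof -
  have "mtr C (mmul C S (mmul C M (madj M))) = (\<Sum>x\<in>C. \<Sum>y\<in>C. \<Sum>z\<in>C. cnj (M x z) * S x y * M y z)"
    by (simp add: mtr_def mmul_def madj_def sum_distrib_left algebra_simps)
  also have "\<dots> = (\<Sum>x\<in>C. \<Sum>z\<in>C. \<Sum>y\<in>C. cnj (M x z) * S x y * M y z)"
    by (rule sum.cong[OF refl], rule sum.swap)
  also have "\<dots> = (\<Sum>z\<in>C. \<Sum>x\<in>C. \<Sum>y\<in>C. cnj (M x z) * S x y * M y z)"
    by (rule sum.swap)
  finally have eq: "mtr C (mmul C S (mmul C M (madj M))) = (\<Sum>z\<in>C. \<Sum>x\<in>C. \<Sum>y\<in>C. cnj (M x z) * S x y * M y z)" .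
  have "Re (\<Sum>z\<in>C. \<Sum>x\<in>C. \<Sum>y\<in>C. cnj (M x z) * S x y * M y z)
      = (\<Sum>z\<in>C. Re (\<Sum>x\<in>C. \<Sum>y\<in>C. cnj (M x z) * S x y * M y z))" by (rule Re_sum)
  also have "\<dots> \<ge> 0"
  proof (rule sum_nonneg)
    fix z assume "z \<in> C"
    show "0 \<le> Re (\<Sum>x\<in>C. \<Sum>y\<in>C. cnj (M x z) * S x y * M y z)"
      using psd[rule_format, of "\<lambda>x. M x z"] by simp
  qed
  finally show ?thesis unfolding eq .
qed


lemma sum_comb:
  fixes c d :: complex and a b e :: "'a \<Rightarrow> complex"
  shows "(\<Sum>m\<in>C. c * (d * (a m - b m) - e m)) = c * (d * (sum a C - sum b C) - sum e C)"
proof -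
  have "c * (d * (sum a C - sum b C) - sum e C) = c * (d * (\<Sum>m\<in>C. a m - b m) - sum e C)"
    by (simp only: sum_subtractf)
  also have "\<dots> = c * ((\<Sum>m\<in>C. d * (a m - b m)) - sum e C)" by (simp only: sum_distrib_left)
  also have "\<dots> = c * (\<Sum>m\<in>C. d * (a m - b m) - e m)" by (simp only: sum_subtractf)
  also have "\<dots> = (\<Sum>m\<in>C. c * (d * (a m - b m) - e m))" by (simp only: sum_distrib_left)
  finally show ?thesis by simp
qed

lemma pair_identity:
  fixes a :: complex and lk lm :: real
  assumes s: "lk + lm > 0"
  defines "Xkm \<equiv> 2 * \<i> * complex_of_real ((lk - lm) / (lk + lm)) * a"
      and "Xmk \<equiv> 2 * \<i> * complex_of_real ((lm - lk) / (lm + lk)) * cnj a"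
  shows "complex_of_real lk * (2 * \<i> * (a * Xmk - Xkm * cnj a) - Xkm * Xmk)
       + complex_of_real lm * (2 * \<i> * (cnj a * Xkm - Xmk * a) - Xmk * Xkm)
       = 4 * complex_of_real ((lk - lm)^2 / (lk + lm) * (cmod a)^2)"
proof -
  define r where "r = (lk - lm) / (lk + lm)"
  have r2: "(lm - lk) / (lm + lk) = - r" unfolding r_def by (simp add: add.commute minus_divide_left)
  have aa: "a * cnj a = complex_of_real ((cmod a)^2)" by (rule complex_norm_square[symmetric])
  define N where "N = (cmod a)^2"
  have "complex_of_real lk * (2 * \<i> * (a * Xmk - Xkm * cnj a) - Xkm * Xmk)
       + complex_of_real lm * (2 * \<i> * (cnj a * Xkm - Xmk * a) - Xmk * Xkm)
     = complex_of_real lk * (2 * \<i> * (- 2 * \<i> * complex_of_real r * (a * cnj a) - 2 * \<i> * complex_of_real r * (a * cnj a)) - (2 * \<i>) * (- 2 * \<i>) * complex_of_real r * complex_of_real r * (a * cnj a))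
       + complex_of_real lm * (2 * \<i> * (2 * \<i> * complex_of_real r * (a * cnj a) + 2 * \<i> * complex_of_real r * (a * cnj a)) - (2 * \<i>) * (- 2 * \<i>) * complex_of_real r * complex_of_real r * (a * cnj a))"
    unfolding Xkm_def Xmk_def r2 r_def[symmetric] by (simp add: algebra_simps)
  also have "\<dots> = complex_of_real ((8 * r * (lk - lm) - 4 * r * r * (lk + lm)) * N)"
    unfolding aa N_def[symmetric] by (simp add: algebra_simps)
  also have "(8 * r * (lk - lm) - 4 * r * r * (lk + lm)) * N = 4 * ((lk - lm)^2 / (lk + lm) * N)"
  proof -
    have rs: "r * (lk + lm) = lk - lm" using s by (simp add: r_def)
    have "8 * r * (lk - lm) - 4 * r * r * (lk + lm) = 8 * r * (lk - lm) - 4 * r * (r * (lk + lm))"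
      by (simp add: mult.assoc)
    also have "\<dots> = 4 * r * (lk - lm)" unfolding rs by simp
    also have "\<dots> = 4 * ((lk - lm)^2 / (lk + lm))" by (simp add: r_def power2_eq_square)
    finally show ?thesis by simp
  qed
  finally show ?thesis by (simp add: N_def)
qed


lemma qfi_functional:
  fixes C :: "'a set" and \<rho> A e :: "'a \<Rightarrow> 'a \<Rightarrow> complex" and lam :: "'a \<Rightarrow> real"
  assumes fin: "finite C"
    and orth: "\<forall>k\<in>C. \<forall>l\<in>C. (\<Sum>x\<in>C. cnj (e k x) * e l x) = (if k = l then 1 else 0)"
    and eig: "\<forall>k\<in>C. \<forall>x\<in>C. (\<Sum>y\<in>C. \<rho> x y * e k y) = complex_of_real (lam k) * e k x"
    and Aherm: "\<forall>x\<in>C. \<forall>y\<in>C. A y x = cnj (A x y)"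
  shows "\<exists>Y. 2 * (\<Sum>k\<in>C. \<Sum>l\<in>C. if lam k + lam l > 0
             then (lam k - lam l)^2 / (lam k + lam l) * (cmod (\<Sum>x\<in>C. \<Sum>y\<in>C. cnj (e k x) * A x y * e l y))^2
             else 0) = Re (mtr C (mmul C \<rho> Y))
    \<and> (\<forall>\<sigma> (c::real). (\<forall>v. 0 \<le> Re (\<Sum>x\<in>C. \<Sum>y\<in>C. cnj (v x) * \<sigma> x y * v y)) \<longrightarrow>
          Re (mtr C (mmul C \<sigma> Y)) \<le> 4 * Re (mtr C (mmul C \<sigma>
             (mmul C (\<lambda>x y. A x y - complex_of_real c * idm x y) (\<lambda>x y. A x y - complex_of_real c * idm x y)))))"
proof -
  define U where "U = (\<lambda>x k. e k x)"
  have u1: "\<forall>k\<in>C. \<forall>l\<in>C. mmul C (madj U) U k l = idm k l"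
    using orth by (simp add: U_def mmul_def madj_def idm_def)
  have u2: "\<forall>x\<in>C. \<forall>y\<in>C. mmul C U (madj U) x y = idm x y"
    using left_right_inv[OF fin u1] .
  define cj where "cj = (\<lambda>Z. mmul C (madj U) (mmul C Z U))"
  have rho_exp: "\<rho> x y = (\<Sum>k\<in>C. complex_of_real (lam k) * U x k * cnj (U y k))"
    if x: "x \<in> C" and y: "y \<in> C" for x y
  proof -
    have "\<rho> x y = mmul C \<rho> idm x y" using mmul_idm_right[OF y fin] by simp
    also have "\<dots> = mmul C \<rho> (mmul C U (madj U)) x y"
      by (rule mmul_cong_right) (use u2 y in auto)
    also have "\<dots> = mmul C (mmul C \<rho> U) (madj U) x y" by (simp add: mmul_assoc)
    also have "\<dots> = (\<Sum>k\<in>C. complex_of_real (lam k) * U x k * cnj (U y k))"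
      unfolding mmul_def madj_def using eig x by (intro sum.cong refl) (simp add: U_def)
    finally show ?thesis .
  qed
  have tr_exp: "mtr C (mmul C \<rho> Z) = (\<Sum>k\<in>C. complex_of_real (lam k) * cj Z k k)" for Z
  proof -
    have "mtr C (mmul C \<rho> Z) = (\<Sum>x\<in>C. \<Sum>y\<in>C. (\<Sum>k\<in>C. complex_of_real (lam k) * U x k * cnj (U y k)) * Z y x)"
      unfolding mtr_def mmul_def using rho_exp by (intro sum.cong refl) simp
    also have "\<dots> = (\<Sum>x\<in>C. \<Sum>y\<in>C. \<Sum>k\<in>C. complex_of_real (lam k) * (cnj (U y k) * Z y x * U x k))"
      by (intro sum.cong refl, subst sum_distrib_right, intro sum.cong refl) (simp add: algebra_simps)
    also have "\<dots> = (\<Sum>x\<in>C. \<Sum>k\<in>C. \<Sum>y\<in>C. complex_of_real (lam k) * (cnj (U y k) * Z y x * U x k))"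
      by (rule sum.cong[OF refl], rule sum.swap)
    also have "\<dots> = (\<Sum>k\<in>C. \<Sum>x\<in>C. \<Sum>y\<in>C. complex_of_real (lam k) * (cnj (U y k) * Z y x * U x k))"
      by (rule sum.swap)
    also have "\<dots> = (\<Sum>k\<in>C. complex_of_real (lam k) * (\<Sum>x\<in>C. \<Sum>y\<in>C. cnj (U y k) * Z y x * U x k))"
      by (simp add: sum_distrib_left)
    also have "\<dots> = (\<Sum>k\<in>C. complex_of_real (lam k) * cj Z k k)"
    proof (rule sum.cong[OF refl])
      fix k
      have "(\<Sum>x\<in>C. \<Sum>y\<in>C. cnj (U y k) * Z y x * U x k) = (\<Sum>y\<in>C. \<Sum>x\<in>C. cnj (U y k) * Z y x * U x k)"
        by (rule sum.swap)
      also have "\<dots> = cj Z k k" by (simp add: cj_def mmul_def madj_def sum_distrib_left mult.assoc)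
      finally show "complex_of_real (lam k) * (\<Sum>x\<in>C. \<Sum>y\<in>C. cnj (U y k) * Z y x * U x k) = complex_of_real (lam k) * cj Z k k"
        by simp
    qed
    finally show ?thesis .
  qed
  have cj_mult: "cj (mmul C P Q) k l = mmul C (cj P) (cj Q) k l" for P Q k l
  proof -
    have "mmul C (cj P) (cj Q) = mmul C (madj U) (mmul C P (mmul C (mmul C U (madj U)) (mmul C Q U)))"
      by (simp add: cj_def mmul_assoc)
    hence "mmul C (cj P) (cj Q) k l = mmul C (madj U) (mmul C P (mmul C (mmul C U (madj U)) (mmul C Q U))) k l"
      by simp
    also have "\<dots> = mmul C (madj U) (mmul C P (mmul C Q U)) k l"
    proof (rule mmul_cong_right, intro ballI)
      fix y assume y: "y \<in> C"
      show "mmul C P (mmul C (mmul C U (madj U)) (mmul C Q U)) y l = mmul C P (mmul C Q U) y l"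
      proof (rule mmul_cong_right, intro ballI)
        fix z assume z: "z \<in> C"
        have "mmul C (mmul C U (madj U)) (mmul C Q U) z l = mmul C idm (mmul C Q U) z l"
          by (rule mmul_cong_left) (use u2 z in auto)
        thus "mmul C (mmul C U (madj U)) (mmul C Q U) z l = mmul C Q U z l"
          using mmul_idm_left[OF z fin] by simp
      qed
    qed
    also have "\<dots> = cj (mmul C P Q) k l" by (simp add: cj_def mmul_assoc)
    finally show ?thesis by simp
  qed
  define Ah where "Ah = cj A"
  have Ah_herm: "Ah l k = cnj (Ah k l)" if k: "k \<in> C" and l: "l \<in> C" for k l
  proof -
    have "cnj (Ah k l) = (\<Sum>x\<in>C. \<Sum>y\<in>C. U x k * cnj (A x y) * cnj (U y l))"
      by (simp add: Ah_def cj_def mmul_def madj_def sum_distrib_left mult.assoc)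
    also have "\<dots> = (\<Sum>x\<in>C. \<Sum>y\<in>C. U x k * A y x * cnj (U y l))"
    proof (intro sum.cong refl)
      fix x y assume x: "x \<in> C" and y: "y \<in> C"
      have "cnj (A x y) = A y x" using Aherm x y by metis
      thus "U x k * cnj (A x y) * cnj (U y l) = U x k * A y x * cnj (U y l)" by simp
    qed
    also have "\<dots> = (\<Sum>y\<in>C. \<Sum>x\<in>C. U x k * A y x * cnj (U y l))" by (rule sum.swap)
    also have "\<dots> = Ah l k" by (simp add: Ah_def cj_def mmul_def madj_def sum_distrib_left algebra_simps)
    finally show ?thesis by simp
  qed
  have Ah_eq: "Ah k l = (\<Sum>x\<in>C. \<Sum>y\<in>C. cnj (e k x) * A x y * e l y)" for k l
    by (simp add: Ah_def cj_def mmul_def madj_def U_def sum_distrib_left mult.assoc)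
  define Xh where "Xh = (\<lambda>k l. if lam k + lam l > 0
      then 2 * \<i> * complex_of_real ((lam k - lam l) / (lam k + lam l)) * Ah k l else 0)"
  have Xh_herm: "Xh l k = cnj (Xh k l)" if k: "k \<in> C" and l: "l \<in> C" for k l
  proof (cases "lam k + lam l > 0")
    case True
    have "(lam l - lam k) / (lam l + lam k) = - ((lam k - lam l) / (lam k + lam l))"
      by (simp add: add.commute minus_divide_left)
    thus ?thesis using True Ah_herm[OF k l] by (simp add: Xh_def add.commute)
  next
    case False
    thus ?thesis by (simp add: Xh_def add.commute)
  qed
  define X where "X = mmul C U (mmul C Xh (madj U))"
  have cjX: "cj X k l = Xh k l" if k: "k \<in> C" and l: "l \<in> C" for k l
  proof -
    have "cj X = mmul C (mmul C (madj U) U) (mmul C Xh (mmul C (madj U) U))"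
      by (simp add: cj_def X_def mmul_assoc)
    hence "cj X k l = mmul C (mmul C (madj U) U) (mmul C Xh (mmul C (madj U) U)) k l" by simp
    also have "\<dots> = mmul C idm (mmul C Xh idm) k l"
    proof -
      have "mmul C (mmul C (madj U) U) (mmul C Xh (mmul C (madj U) U)) k l
          = mmul C idm (mmul C Xh (mmul C (madj U) U)) k l"
        by (rule mmul_cong_left) (use u1 k in auto)
      also have "\<dots> = mmul C idm (mmul C Xh idm) k l"
      proof (rule mmul_cong_right, intro ballI)
        fix y assume "y \<in> C"
        show "mmul C Xh (mmul C (madj U) U) y l = mmul C Xh idm y l"
          by (rule mmul_cong_right) (use u1 l in auto)
      qed
      finally show ?thesis .
    qed
    also have "\<dots> = Xh k l" using mmul_idm_left[OF k fin] mmul_idm_right[OF l fin] by simp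
    finally show ?thesis .
  qed
  have X_herm: "X y x = cnj (X x y)" if x: "x \<in> C" and y: "y \<in> C" for x y
  proof -
    have "cnj (X x y) = (\<Sum>m\<in>C. \<Sum>n\<in>C. cnj (U x m) * cnj (Xh m n) * U y n)"
      by (simp add: X_def mmul_def madj_def sum_distrib_left mult.assoc)
    also have "\<dots> = (\<Sum>m\<in>C. \<Sum>n\<in>C. cnj (U x m) * Xh n m * U y n)"
    proof (intro sum.cong refl)
      fix m n assume m: "m \<in> C" and n: "n \<in> C"
      show "cnj (U x m) * cnj (Xh m n) * U y n = cnj (U x m) * Xh n m * U y n"
        using Xh_herm[OF m n] by simp
    qed
    also have "\<dots> = (\<Sum>n\<in>C. \<Sum>m\<in>C. cnj (U x m) * Xh n m * U y n)" by (rule sum.swap)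
    also have "\<dots> = X y x" by (simp add: X_def mmul_def madj_def sum_distrib_left algebra_simps)
    finally show ?thesis by simp
  qed
  define Y where "Y = (\<lambda>x y. 2 * \<i> * (mmul C A X x y - mmul C X A x y) - mmul C X X x y)"
  have cjY: "cj Y k k = 2 * \<i> * ((\<Sum>m\<in>C. Ah k m * Xh m k) - (\<Sum>m\<in>C. Xh k m * Ah m k)) - (\<Sum>m\<in>C. Xh k m * Xh m k)"
    if k: "k \<in> C" for k
  proof -
    have "cj Y k k = 2 * \<i> * (cj (mmul C A X) k k - cj (mmul C X A) k k) - cj (mmul C X X) k k"
      by (simp add: cj_def Y_def mmul_diff_left mmul_diff_right mmul_smult_left mmul_smult_right)
    also have "\<dots> = 2 * \<i> * (mmul C Ah (cj X) k k - mmul C (cj X) Ah k k) - mmul C (cj X) (cj X) k k"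
      by (simp add: cj_mult Ah_def)
    also have "\<dots> = 2 * \<i> * ((\<Sum>m\<in>C. Ah k m * Xh m k) - (\<Sum>m\<in>C. Xh k m * Ah m k)) - (\<Sum>m\<in>C. Xh k m * Xh m k)"
      using cjX k by (simp add: mmul_def)
    finally show ?thesis .
  qed
  define F where "F = (\<lambda>k m. complex_of_real (lam k) * (2 * \<i> * (Ah k m * Xh m k - Xh k m * Ah m k) - Xh k m * Xh m k))"
  define G where "G = (\<lambda>k m. if lam k + lam m > 0 then (lam k - lam m)^2 / (lam k + lam m) * (cmod (Ah k m))^2 else 0)"
  have trY: "mtr C (mmul C \<rho> Y) = (\<Sum>k\<in>C. \<Sum>m\<in>C. F k m)"
    unfolding tr_exp F_def using cjY
    by (intro sum.cong refl) (simp only: sum_comb)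
  have FF: "F k m + F m k = 4 * complex_of_real (G k m)" if k: "k \<in> C" and m: "m \<in> C" for k m
  proof (cases "lam k + lam m > 0")
    case True
    hence True': "lam m + lam k > 0" by simp
    have "F k m + F m k = complex_of_real (lam k) * (2 * \<i> * (Ah k m * Xh m k - Xh k m * cnj (Ah k m)) - Xh k m * Xh m k)
       + complex_of_real (lam m) * (2 * \<i> * (cnj (Ah k m) * Xh k m - Xh m k * Ah k m) - Xh m k * Xh k m)"
      unfolding F_def using Ah_herm[OF k m] by simp
    also have "\<dots> = 4 * complex_of_real ((lam k - lam m)^2 / (lam k + lam m) * (cmod (Ah k m))^2)"
      using pair_identity[OF True, of "Ah k m"] True True' Ah_herm[OF k m] by (simp add: Xh_def)
    finally show ?thesis using True by (simp add: G_def)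
  next
    case False
    hence "\<not> lam m + lam k > 0" by simp
    thus ?thesis using False by (simp add: F_def G_def Xh_def)
  qed
  have sumF: "(\<Sum>k\<in>C. \<Sum>m\<in>C. F k m) = complex_of_real (2 * (\<Sum>k\<in>C. \<Sum>m\<in>C. G k m))"
  proof -
    have "2 * (\<Sum>k\<in>C. \<Sum>m\<in>C. F k m) = (\<Sum>k\<in>C. \<Sum>m\<in>C. F k m) + (\<Sum>m\<in>C. \<Sum>k\<in>C. F k m)"
      by (simp add: sum.swap[of "\<lambda>k m. F k m" C C])
    also have "\<dots> = (\<Sum>k\<in>C. \<Sum>m\<in>C. F k m + F m k)" by (simp add: sum.distrib)
    also have "\<dots> = (\<Sum>k\<in>C. \<Sum>m\<in>C. 4 * complex_of_real (G k m))"
      using FF by (intro sum.cong refl) auto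
    also have "\<dots> = 2 * complex_of_real (2 * (\<Sum>k\<in>C. \<Sum>m\<in>C. G k m))"
      by (simp add: sum_distrib_left)
    finally show ?thesis by simp
  qed
  have part1: "2 * (\<Sum>k\<in>C. \<Sum>l\<in>C. if lam k + lam l > 0
             then (lam k - lam l)^2 / (lam k + lam l) * (cmod (\<Sum>x\<in>C. \<Sum>y\<in>C. cnj (e k x) * A x y * e l y))^2
             else 0) = Re (mtr C (mmul C \<rho> Y))"
    unfolding trY sumF G_def Ah_eq by simp
  have part2: "Re (mtr C (mmul C \<sigma> Y)) \<le> 4 * Re (mtr C (mmul C \<sigma>
             (mmul C (\<lambda>x y. A x y - complex_of_real c * idm x y) (\<lambda>x y. A x y - complex_of_real c * idm x y))))"
    if psd: "\<forall>v. 0 \<le> Re (\<Sum>x\<in>C. \<Sum>y\<in>C. cnj (v x) * \<sigma> x y * v y)" for \<sigma> and c :: real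
  proof -
    define B where "B = (\<lambda>x y. A x y - complex_of_real c * idm x y)"
    define M where "M = (\<lambda>x y. 2 * B x y + \<i> * X x y)"
    define M' where "M' = (\<lambda>x y. 2 * B x y + (- \<i>) * X x y)"
    have madjM: "madj M y z = M' y z" if y: "y \<in> C" and z: "z \<in> C" for y z
    proof -
      have "cnj (A z y) = A y z" using Aherm y z by metis
      moreover have "cnj (X z y) = X y z" using X_herm y z by metis
      ultimately show ?thesis by (simp add: madj_def M_def M'_def B_def idm_def)
    qed
    have BX: "mmul C B X x z = mmul C A X x z - complex_of_real c * X x z" if x: "x \<in> C" for x z
      unfolding B_def mmul_diff_left mmul_smult_left using mmul_idm_left[OF x fin] by simp
    have XB: "mmul C X B x z = mmul C X A x z - complex_of_real c * X x z" if z: "z \<in> C" for x z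
      unfolding B_def mmul_diff_right mmul_smult_right using mmul_idm_right[OF z fin] by simp
    have Yeq: "Y x z = 4 * mmul C B B x z - mmul C M (madj M) x z" if x: "x \<in> C" and z: "z \<in> C" for x z
    proof -
      have "mmul C M (madj M) x z = mmul C M M' x z"
        by (rule mmul_cong_right) (use madjM z in auto)
      also have "\<dots> = 2 * (2 * mmul C B B x z + (- \<i>) * mmul C B X x z) + \<i> * (2 * mmul C X B x z + (- \<i>) * mmul C X X x z)"
        unfolding M_def M'_def mmul_lin_left mmul_lin_right by simp
      also have "\<dots> = 4 * mmul C B B x z - Y x z"
        unfolding BX[OF x] XB[OF z] Y_def by (simp add: algebra_simps)
      finally show ?thesis by simp
    qed
    have "mtr C (mmul C \<sigma> Y) = mtr C (mmul C \<sigma> (\<lambda>x z. 4 * mmul C B B x z - mmul C M (madj M) x z))"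
      by (rule mtr_cong) (use Yeq in auto)
    also have "\<dots> = 4 * mtr C (mmul C \<sigma> (mmul C B B)) - mtr C (mmul C \<sigma> (mmul C M (madj M)))"
      unfolding mtr_diff by (simp add: mtr_def mmul_smult_right sum_distrib_left)
    finally have "Re (mtr C (mmul C \<sigma> Y)) = 4 * Re (mtr C (mmul C \<sigma> (mmul C B B))) - Re (mtr C (mmul C \<sigma> (mmul C M (madj M))))"
      by simp
    thus ?thesis using psd_mtr[OF psd, of M] unfolding B_def by linarith
  qed
  show ?thesis using part1 part2 by blast
qed

lemma restr_cfg[simp]: "restr A x \<in> cfg A"
  by (simp add: restr_def cfg_def)

lemma finite_cfg: "finite S \<Longrightarrow> finite (cfg S)"
proof -
  assume fin: "finite S"
  have "cfg S \<subseteq> (\<lambda>T i. i \<in> T) ` Pow S"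
  proof
    fix x assume x: "x \<in> cfg S"
    have "x = (\<lambda>i. i \<in> {i. x i})" by simp
    moreover have "{i. x i} \<subseteq> S" using x by (auto simp: cfg_def)
    ultimately show "x \<in> (\<lambda>T i. i \<in> T) ` Pow S" by blast
  qed
  thus ?thesis using fin by (meson finite_Pow_iff finite_imageI finite_subset)
qed

lemma cfg_empty: "cfg {} = {\<lambda>_. False}"
  by (auto simp: cfg_def)

lemma restr_cfg_id: "u \<in> cfg A \<Longrightarrow> restr A u = u"
  by (auto simp: restr_def cfg_def fun_eq_iff)

lemma prod_sum_cfg:
  fixes f :: "nat set \<Rightarrow> config \<Rightarrow> 'b::comm_semiring_1"
  assumes "finite \<Lambda>" and "disjoint \<Lambda>"
  shows "(\<Sum>x\<in>cfg (\<Union>\<Lambda>). \<Prod>A\<in>\<Lambda>. f A (restr A x)) = (\<Prod>A\<in>\<Lambda>. \<Sum>u\<in>cfg A. f A u)"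
  using assms
proof (induction \<Lambda> rule: finite_induct)
  case empty
  show ?case by (simp add: cfg_empty)
next
  case (insert B \<Lambda>)
  define U where "U = \<Union>\<Lambda>"
  have disj: "disjoint \<Lambda>" using insert(4) by (simp add: pairwise_insert)
  have BU: "B \<inter> U = {}"
  proof -
    have "\<forall>A\<in>\<Lambda>. disjnt B A" using insert(2,4) by (auto simp: pairwise_insert)
    thus ?thesis unfolding U_def by (auto simp: disjnt_def)
  qed
  define h where "h = (\<lambda>(u, w). \<lambda>i::nat. if i \<in> B then u i else (w i :: bool))"
  have hB: "restr B (h (u, w)) = u" if "u \<in> cfg B" for u w
    using that by (auto simp: h_def restr_def cfg_def fun_eq_iff)
  have hA: "restr A (h (u, w)) = restr A w" if "A \<in> \<Lambda>" for A u w
  proof -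
    have "A \<subseteq> U" using that by (auto simp: U_def)
    hence "\<forall>i\<in>A. i \<notin> B" using BU by auto
    thus ?thesis by (auto simp: h_def restr_def fun_eq_iff)
  qed
  have bij: "bij_betw h (cfg B \<times> cfg U) (cfg (B \<union> U))"
  proof (rule bij_betwI')
    fix p q assume p: "p \<in> cfg B \<times> cfg U" and q: "q \<in> cfg B \<times> cfg U"
    obtain u w where pu: "p = (u, w)" by (cases p)
    obtain u' w' where qu: "q = (u', w')" by (cases q)
    show "(h p = h q) = (p = q)"
    proof
      assume eq: "h p = h q"
      have "u = u'" using hB[of u w] hB[of u' w'] p q eq pu qu by auto
      moreover have "w = w'"
      proof
        fix i show "w i = w' i"
        proof (cases "i \<in> B")
          case True
          hence "i \<notin> U" using BU by auto
          thus ?thesis using p q pu qu by (auto simp: cfg_def)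
        next
          case False
          have "h p i = h q i" using eq by simp
          thus ?thesis using False pu qu by (simp add: h_def)
        qed
      qed
      ultimately show "p = q" using pu qu by simp
    qed simp
  next
    fix p assume "p \<in> cfg B \<times> cfg U"
    thus "h p \<in> cfg (B \<union> U)" by (auto simp: h_def cfg_def split: prod.splits)
  next
    fix x assume x: "x \<in> cfg (B \<union> U)"
    have "x = h (restr B x, restr U x)" using x by (auto simp: h_def restr_def cfg_def fun_eq_iff)
    thus "\<exists>p\<in>cfg B \<times> cfg U. x = h p" by force
  qed
  have "(\<Sum>x\<in>cfg (\<Union>(insert B \<Lambda>)). \<Prod>A\<in>insert B \<Lambda>. f A (restr A x))
      = (\<Sum>x\<in>cfg (B \<union> U). f B (restr B x) * (\<Prod>A\<in>\<Lambda>. f A (restr A x)))"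
    using insert(1,2) by (simp add: U_def)
  also have "\<dots> = (\<Sum>p\<in>cfg B \<times> cfg U. f B (restr B (h p)) * (\<Prod>A\<in>\<Lambda>. f A (restr A (h p))))"
    by (rule sum.reindex_bij_betw[OF bij, symmetric])
  also have "\<dots> = (\<Sum>u\<in>cfg B. \<Sum>w\<in>cfg U. f B (restr B (h (u, w))) * (\<Prod>A\<in>\<Lambda>. f A (restr A (h (u, w)))))"
    by (simp add: sum.cartesian_product)
  also have "\<dots> = (\<Sum>u\<in>cfg B. \<Sum>w\<in>cfg U. f B u * (\<Prod>A\<in>\<Lambda>. f A (restr A w)))"
    using hB hA by (intro sum.cong refl) (simp cong: prod.cong)
  also have "\<dots> = (\<Sum>u\<in>cfg B. f B u) * (\<Sum>w\<in>cfg U. \<Prod>A\<in>\<Lambda>. f A (restr A w))"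
    by (simp add: sum_product)
  also have "\<dots> = (\<Sum>u\<in>cfg B. f B u) * (\<Prod>A\<in>\<Lambda>. \<Sum>u\<in>cfg A. f A u)"
    using insert(3)[OF disj] by (simp add: U_def)
  also have "\<dots> = (\<Prod>A\<in>insert B \<Lambda>. \<Sum>u\<in>cfg A. f A u)" using insert(1,2) by simp
  finally show ?case .
qed


definition tens :: "nat set set \<Rightarrow> (nat set \<Rightarrow> op) \<Rightarrow> op" where
  "tens \<Lambda> Ob = (\<lambda>x y. \<Prod>A\<in>\<Lambda>. Ob A (restr A x) (restr A y))"

lemma tens_mult:
  assumes "finite \<Lambda>" "disjoint \<Lambda>"
  shows "mmul (cfg (\<Union>\<Lambda>)) (tens \<Lambda> Ob) (tens \<Lambda> P) = tens \<Lambda> (\<lambda>A. mmul (cfg A) (Ob A) (P A))"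
proof (intro ext)
  fix x z
  have "mmul (cfg (\<Union>\<Lambda>)) (tens \<Lambda> Ob) (tens \<Lambda> P) x z
      = (\<Sum>y\<in>cfg (\<Union>\<Lambda>). \<Prod>A\<in>\<Lambda>. Ob A (restr A x) (restr A y) * P A (restr A y) (restr A z))"
    by (simp add: mmul_def tens_def prod.distrib)
  also have "\<dots> = (\<Prod>A\<in>\<Lambda>. \<Sum>v\<in>cfg A. Ob A (restr A x) v * P A v (restr A z))"
    by (rule prod_sum_cfg[OF assms, of "\<lambda>A v. Ob A (restr A x) v * P A v (restr A z)"])
  also have "\<dots> = tens \<Lambda> (\<lambda>A. mmul (cfg A) (Ob A) (P A)) x z" by (simp add: tens_def mmul_def)
  finally show "mmul (cfg (\<Union>\<Lambda>)) (tens \<Lambda> Ob) (tens \<Lambda> P) x z = tens \<Lambda> (\<lambda>A. mmul (cfg A) (Ob A) (P A)) x z" .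
qed

lemma tens_tr:
  assumes "finite \<Lambda>" "disjoint \<Lambda>"
  shows "mtr (cfg (\<Union>\<Lambda>)) (tens \<Lambda> Ob) = (\<Prod>A\<in>\<Lambda>. mtr (cfg A) (Ob A))"
  unfolding mtr_def tens_def by (rule prod_sum_cfg[OF assms, of "\<lambda>A u. Ob A u u"])

lemma tens_madj: "madj (tens \<Lambda> Ob) = tens \<Lambda> (\<lambda>A. madj (Ob A))"
  by (simp add: madj_def tens_def fun_eq_iff)

lemma tens_cong:
  assumes "\<forall>A\<in>\<Lambda>. \<forall>u\<in>cfg A. \<forall>v\<in>cfg A. Ob A u v = Ob' A u v"
  shows "tens \<Lambda> Ob = tens \<Lambda> Ob'"
  using assms by (simp add: tens_def fun_eq_iff)

lemma tens_idm:
  assumes "finite \<Lambda>" and x: "x \<in> cfg (\<Union>\<Lambda>)" and y: "y \<in> cfg (\<Union>\<Lambda>)"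
  shows "tens \<Lambda> (\<lambda>_. idm) x y = idm x y"
proof (cases "x = y")
  case True thus ?thesis by (simp add: tens_def idm_def)
next
  case False
  then obtain i where i: "x i \<noteq> y i" by auto
  hence "i \<in> \<Union>\<Lambda>" using x y by (auto simp: cfg_def)
  then obtain A where A: "A \<in> \<Lambda>" "i \<in> A" by auto
  have "restr A x \<noteq> restr A y" using i A by (auto simp: restr_def fun_eq_iff)
  hence "idm (restr A x) (restr A y) = (0::complex)" by (simp add: idm_def)
  hence "tens \<Lambda> (\<lambda>_. idm) x y = 0" unfolding tens_def using A assms(1) by (metis prod_zero_iff)
  thus ?thesis using False by (simp add: idm_def)
qed

lemma psd_mmul_adj: "0 \<le> Re (\<Sum>x\<in>C. \<Sum>y\<in>C. cnj (v x) * mmul C T (madj T) x y * v y)"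
proof -
  define w where "w = (\<lambda>z. \<Sum>x\<in>C. cnj (v x) * T x z)"
  have "(\<Sum>x\<in>C. \<Sum>y\<in>C. cnj (v x) * mmul C T (madj T) x y * v y)
      = (\<Sum>x\<in>C. \<Sum>y\<in>C. \<Sum>z\<in>C. cnj (v x) * T x z * (cnj (T y z) * v y))"
    by (intro sum.cong refl) (simp add: mmul_def madj_def sum_distrib_left sum_distrib_right mult.assoc)
  also have "\<dots> = (\<Sum>x\<in>C. \<Sum>z\<in>C. \<Sum>y\<in>C. cnj (v x) * T x z * (cnj (T y z) * v y))"
    by (rule sum.cong[OF refl], rule sum.swap)
  also have "\<dots> = (\<Sum>z\<in>C. \<Sum>x\<in>C. \<Sum>y\<in>C. cnj (v x) * T x z * (cnj (T y z) * v y))"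
    by (rule sum.swap)
  also have "\<dots> = (\<Sum>z\<in>C. w z * cnj (w z))"
    by (intro sum.cong refl) (simp add: w_def sum_product ac_simps, rule sum.swap)
  also have "\<dots> = complex_of_real (\<Sum>z\<in>C. (cmod (w z))^2)"
    by (simp add: complex_norm_square del: of_real_power)
  finally show ?thesis by (simp add: sum_nonneg)
qed

lemma spec_exp:
  fixes \<rho> U :: "'a \<Rightarrow> 'a \<Rightarrow> complex"
  assumes fin: "finite C" and u2: "\<forall>x\<in>C. \<forall>y\<in>C. mmul C U (madj U) x y = idm x y"
    and eig: "\<forall>k\<in>C. \<forall>x\<in>C. mvec C \<rho> (\<lambda>y. U y k) x = complex_of_real (lam k) * U x k"
    and x: "x \<in> C" and y: "y \<in> C"
  shows "\<rho> x y = (\<Sum>k\<in>C. complex_of_real (lam k) * U x k * cnj (U y k))"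
proof -
  have "\<rho> x y = mmul C \<rho> idm x y" using mmul_idm_right[OF y fin] by simp
  also have "\<dots> = mmul C \<rho> (mmul C U (madj U)) x y"
    by (rule mmul_cong_right) (use u2 y in auto)
  also have "\<dots> = mmul C (mmul C \<rho> U) (madj U) x y" by (simp add: mmul_assoc)
  also have "\<dots> = (\<Sum>k\<in>C. complex_of_real (lam k) * U x k * cnj (U y k))"
    unfolding mmul_def madj_def using eig x by (intro sum.cong refl) (simp add: mvec_def)
  finally show ?thesis .
qed

lemma density_sqrt:
  assumes fin: "finite S" and d: "density_on S \<tau>"
  shows "\<exists>R. \<forall>u\<in>cfg S. \<forall>v\<in>cfg S. \<tau> u v = mmul (cfg S) R (madj R) u v"
proof -
  define C where "C = cfg S"
  have finC: "finite C" using finite_cfg[OF fin] by (simp add: C_def)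
  have herm: "\<forall>x\<in>C. \<forall>y\<in>C. \<tau> y x = cnj (\<tau> x y)" using d unfolding density_on_def C_def by blast
  have psd: "\<forall>v. 0 \<le> Re (\<Sum>x\<in>C. \<Sum>y\<in>C. cnj (v x) * \<tau> x y * v y)" using d unfolding density_on_def C_def by blast
  obtain U lam where u1: "\<forall>x\<in>C. \<forall>y\<in>C. mmul C (madj U) U x y = idm x y"
    and u2: "\<forall>x\<in>C. \<forall>y\<in>C. mmul C U (madj U) x y = idm x y"
    and eig: "\<forall>k\<in>C. \<forall>x\<in>C. mvec C \<tau> (\<lambda>y. U y k) x = complex_of_real (lam k) * U x k"
    using spectral[OF finC herm] by blast
  have lam_nn: "lam k \<ge> 0" if k: "k \<in> C" for k
  proof -
    have "(\<Sum>x\<in>C. \<Sum>y\<in>C. cnj (U x k) * \<tau> x y * U y k) = (\<Sum>x\<in>C. cnj (U x k) * mvec C \<tau> (\<lambda>y. U y k) x)"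
      by (simp add: mvec_def sum_distrib_left mult.assoc)
    also have "\<dots> = complex_of_real (lam k) * mmul C (madj U) U k k"
      using eig k by (simp add: mmul_def madj_def sum_distrib_left algebra_simps)
    also have "\<dots> = complex_of_real (lam k)" using u1 k by (simp add: idm_def)
    finally show ?thesis using psd[rule_format, of "\<lambda>x. U x k"] by simp
  qed
  define R where "R = (\<lambda>x k. U x k * complex_of_real (sqrt (lam k)))"
  have "\<tau> u v = mmul C R (madj R) u v" if u: "u \<in> C" and v: "v \<in> C" for u v
  proof -
    have "\<tau> u v = (\<Sum>k\<in>C. complex_of_real (lam k) * U u k * cnj (U v k))"
      using spec_exp[OF finC u2 eig u v] .
    also have "\<dots> = mmul C R (madj R) u v"
      unfolding mmul_def madj_def R_def
    proof (intro sum.cong refl)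
      fix k assume k: "k \<in> C"
      have "complex_of_real (sqrt (lam k)) * complex_of_real (sqrt (lam k)) = complex_of_real (lam k)"
      proof -
        have "sqrt (lam k) * sqrt (lam k) = lam k" using lam_nn[OF k] by simp
        thus ?thesis by (metis of_real_mult)
      qed
      thus "complex_of_real (lam k) * U u k * cnj (U v k) = U u k * complex_of_real (sqrt (lam k)) * cnj (U v k * complex_of_real (sqrt (lam k)))"
        by (simp add: algebra_simps)
    qed
    finally show ?thesis .
  qed
  thus ?thesis unfolding C_def by blast
qed

lemma tens_psd:
  assumes fin: "finite \<Lambda>" and disj: "disjoint \<Lambda>" and finA: "\<forall>A\<in>\<Lambda>. finite A"
    and dens: "\<forall>A\<in>\<Lambda>. density_on A (\<tau> A)"
  shows "0 \<le> Re (\<Sum>x\<in>cfg (\<Union>\<Lambda>). \<Sum>y\<in>cfg (\<Union>\<Lambda>). cnj (v x) * tens \<Lambda> \<tau> x y * v y)"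
proof -
  have "\<forall>A\<in>\<Lambda>. \<exists>R. \<forall>u\<in>cfg A. \<forall>w\<in>cfg A. \<tau> A u w = mmul (cfg A) R (madj R) u w"
  proof
    fix A assume A: "A \<in> \<Lambda>"
    show "\<exists>R. \<forall>u\<in>cfg A. \<forall>w\<in>cfg A. \<tau> A u w = mmul (cfg A) R (madj R) u w"
      using density_sqrt[of A "\<tau> A"] finA dens A by blast
  qed
  then obtain R where R: "\<forall>A\<in>\<Lambda>. \<forall>u\<in>cfg A. \<forall>w\<in>cfg A. \<tau> A u w = mmul (cfg A) (R A) (madj (R A)) u w"
    by (rule bchoice[THEN exE]) blast
  have "tens \<Lambda> \<tau> = tens \<Lambda> (\<lambda>A. mmul (cfg A) (R A) (madj (R A)))" by (rule tens_cong) (use R in blast)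
  also have "\<dots> = mmul (cfg (\<Union>\<Lambda>)) (tens \<Lambda> R) (tens \<Lambda> (\<lambda>A. madj (R A)))"
    by (rule tens_mult[OF fin disj, symmetric])
  also have "\<dots> = mmul (cfg (\<Union>\<Lambda>)) (tens \<Lambda> R) (madj (tens \<Lambda> R))" by (simp add: tens_madj)
  finally have eq: "tens \<Lambda> \<tau> = mmul (cfg (\<Union>\<Lambda>)) (tens \<Lambda> R) (madj (tens \<Lambda> R))" .
  show ?thesis unfolding eq by (rule psd_mmul_adj)
qed

definition Pop :: "real \<Rightarrow> real \<Rightarrow> real \<Rightarrow> nat \<Rightarrow> op" where
  "Pop n1 n2 n3 i = (\<lambda>x y. if (\<forall>j. j \<noteq> i \<longrightarrow> x j = y j) then pauli_n n1 n2 n3 (x i) (y i) else 0)"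

definition Jloc :: "real \<Rightarrow> real \<Rightarrow> real \<Rightarrow> nat set \<Rightarrow> op" where
  "Jloc n1 n2 n3 A = (\<lambda>x y. (1/2) * (\<Sum>i\<in>A. Pop n1 n2 n3 i x y))"

lemma J_op_Jloc: "J_op N n1 n2 n3 = Jloc n1 n2 n3 {1..N}"
  by (simp add: J_op_def Jloc_def Pop_def fun_eq_iff)



lemma pauli_cnj: "cnj (pauli_n n1 n2 n3 b a) = pauli_n n1 n2 n3 a b"
  by (cases a; cases b) (simp_all add: pauli_n_def complex_eq_iff)

lemma Pop_herm: "madj (Pop n1 n2 n3 i) = Pop n1 n2 n3 i"
proof (intro ext)
  fix x y :: config
  have sym: "(\<forall>j. j \<noteq> i \<longrightarrow> y j = x j) = (\<forall>j. j \<noteq> i \<longrightarrow> x j = y j)" by auto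
  show "madj (Pop n1 n2 n3 i) x y = Pop n1 n2 n3 i x y"
    unfolding madj_def Pop_def sym by (cases "\<forall>j. j \<noteq> i \<longrightarrow> x j = y j") (auto simp: pauli_cnj)
qed

lemma Pop_zero: "\<not> (\<forall>j. j \<noteq> i \<longrightarrow> x j = y j) \<Longrightarrow> Pop n1 n2 n3 i x y = 0"
  unfolding Pop_def by (rule if_not_P)

lemma Jloc_herm: "madj (Jloc n1 n2 n3 A) = Jloc n1 n2 n3 A"
proof -
  have "cnj (Pop n1 n2 n3 i y x) = Pop n1 n2 n3 i x y" for i x y
    using Pop_herm[of n1 n2 n3 i] by (metis madj_def)
  thus ?thesis by (simp add: madj_def Jloc_def fun_eq_iff)
qed

lemma pauli_sq:
  assumes unit: "n1^2 + n2^2 + n3^2 = 1"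
  shows "pauli_n n1 n2 n3 a False * pauli_n n1 n2 n3 False b + pauli_n n1 n2 n3 a True * pauli_n n1 n2 n3 True b
         = (if a = b then 1 else 0)"
  using unit by (cases a; cases b) (simp_all add: pauli_n_def complex_eq_iff power2_eq_square algebra_simps)

lemma Pop_sq:
  assumes unit: "n1^2 + n2^2 + n3^2 = 1" and iA: "i \<in> A" and fin: "finite A"
    and u: "u \<in> cfg A" and v: "v \<in> cfg A"
  shows "mmul (cfg A) (Pop n1 n2 n3 i) (Pop n1 n2 n3 i) u v = idm u v"
proof -
  let ?P = "Pop n1 n2 n3 i"
  let ?p = "pauli_n n1 n2 n3"
  define W where "W = {u(i := False), u(i := True)}"
  have WA: "W \<subseteq> cfg A" using u iA by (auto simp: W_def cfg_def)
  have finC: "finite (cfg A)" using finite_cfg[OF fin] .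
  have "mmul (cfg A) ?P ?P u v = (\<Sum>w\<in>W. ?P u w * ?P w v)"
    unfolding mmul_def
  proof (rule sum.mono_neutral_right[OF finC WA], intro ballI)
    fix w assume w: "w \<in> cfg A - W"
    have "\<not> (\<forall>j. j \<noteq> i \<longrightarrow> u j = w j)"
    proof
      assume "\<forall>j. j \<noteq> i \<longrightarrow> u j = w j"
      hence "w = u(i := w i)" by (intro ext) (metis fun_upd_apply)
      hence "w \<in> W" by (cases "w i") (auto simp: W_def)
      thus False using w by auto
    qed
    thus "?P u w * ?P w v = 0" by (simp add: Pop_zero)
  qed
  also have "\<dots> = ?P u (u(i := False)) * ?P (u(i := False)) v + ?P u (u(i := True)) * ?P (u(i := True)) v"
  proof -
    have "u(i := False) \<noteq> u(i := True)" by (metis fun_upd_same)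
    thus ?thesis by (simp add: W_def)
  qed
  also have "\<dots> = idm u v"
  proof (cases "\<forall>j. j \<noteq> i \<longrightarrow> u j = v j")
    case True
    have "?P u (u(i := False)) * ?P (u(i := False)) v + ?P u (u(i := True)) * ?P (u(i := True)) v
        = ?p (u i) False * ?p False (v i) + ?p (u i) True * ?p True (v i)"
      using True by (simp add: Pop_def)
    also have "\<dots> = (if u i = v i then 1 else 0)" by (rule pauli_sq[OF unit])
    also have "\<dots> = idm u v" using True by (auto simp: idm_def fun_eq_iff)
    finally show ?thesis .
  next
    case False
    hence "u \<noteq> v" by auto
    have z: "?P u (u(i := b)) * ?P (u(i := b)) v = 0" for b
      using False by (auto simp: Pop_def)
    have "?P u (u(i := False)) * ?P (u(i := False)) v + ?P u (u(i := True)) * ?P (u(i := True)) v = 0"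
      by (simp only: z add_0_right)
    thus ?thesis using \<open>u \<noteq> v\<close> by (simp add: idm_def)
  qed
  finally show ?thesis .
qed


lemma mmul_sum_left: "mmul C (\<lambda>x y. \<Sum>i\<in>I. F i x y) Q = (\<lambda>x z. \<Sum>i\<in>I. mmul C (F i) Q x z)"
  by (simp add: mmul_def fun_eq_iff sum_distrib_right sum.swap[of _ C I])

lemma mmul_sum_right: "mmul C Q (\<lambda>x y. \<Sum>i\<in>I. F i x y) = (\<lambda>x z. \<Sum>i\<in>I. mmul C Q (F i) x z)"
  by (simp add: mmul_def fun_eq_iff sum_distrib_left sum.swap[of _ C I])

lemma mtr_sum: "mtr C (mmul C S (\<lambda>x y. \<Sum>i\<in>I. F i x y)) = (\<Sum>i\<in>I. mtr C (mmul C S (F i)))"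
  by (simp add: mtr_def mmul_sum_right sum.swap[of _ C I])

lemma mtr_smult: "mtr C (mmul C S (\<lambda>x y. a * F x y)) = a * mtr C (mmul C S F)"
  by (simp add: mtr_def mmul_smult_right sum_distrib_left)

lemma mtr_add: "mtr C (mmul C S (\<lambda>x y. P x y + Q x y)) = mtr C (mmul C S P) + mtr C (mmul C S Q)"
  by (simp add: mtr_def mmul_add_right sum.distrib)

lemma mtr_density_idm:
  assumes "density_on A \<tau>" "finite A"
  shows "mtr (cfg A) (mmul (cfg A) \<tau> idm) = 1"
proof -
  have "mtr (cfg A) (mmul (cfg A) \<tau> idm) = (\<Sum>x\<in>cfg A. \<tau> x x)"
    unfolding mtr_def using mmul_idm_right[OF _ finite_cfg[OF assms(2)]] by simp
  also have "\<dots> = 1" using assms(1) unfolding density_on_def by blast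
  finally show ?thesis .
qed

lemma Jloc_bound:
  assumes unit: "n1^2 + n2^2 + n3^2 = 1" and fin: "finite A" and dens: "density_on A \<tau>"
  shows "Re (mtr (cfg A) (mmul (cfg A) \<tau> (mmul (cfg A) (Jloc n1 n2 n3 A) (Jloc n1 n2 n3 A)))) \<le> (real (card A))^2 / 4"
proof -
  define C where "C = cfg A"
  define P where "P = Pop n1 n2 n3"
  have psd: "\<forall>v. 0 \<le> Re (\<Sum>x\<in>C. \<Sum>y\<in>C. cnj (v x) * \<tau> x y * v y)"
    using dens unfolding density_on_def C_def by blast
  define T where "T = (\<lambda>i j. Re (mtr C (mmul C \<tau> (mmul C (P i) (P j)))))"
  have JJ: "mmul C (Jloc n1 n2 n3 A) (Jloc n1 n2 n3 A) = (\<lambda>x z. (1/4) * (\<Sum>i\<in>A. \<Sum>j\<in>A. mmul C (P i) (P j) x z))"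
    unfolding Jloc_def P_def mmul_smult_left mmul_smult_right mmul_sum_left mmul_sum_right
    by (simp add: fun_eq_iff)
  have trJJ: "Re (mtr C (mmul C \<tau> (mmul C (Jloc n1 n2 n3 A) (Jloc n1 n2 n3 A)))) = (1/4) * (\<Sum>i\<in>A. \<Sum>j\<in>A. T i j)"
    unfolding JJ mtr_smult mtr_sum T_def by (simp add: Re_sum)
  have tr1: "mtr C (mmul C \<tau> (mmul C (P i) (P i))) = 1" if i: "i \<in> A" for i
  proof -
    have "mtr C (mmul C \<tau> (mmul C (P i) (P i))) = mtr C (mmul C \<tau> idm)"
      by (rule mtr_cong) (use Pop_sq[OF unit i fin] in \<open>auto simp: C_def P_def\<close>)
    thus ?thesis using mtr_density_idm[OF dens fin] by (simp add: C_def)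
  qed
  have pair: "T i j + T j i \<le> 2" if i: "i \<in> A" and j: "j \<in> A" for i j
  proof -
    define D where "D = (\<lambda>x y. P i x y - P j x y)"
    have madjD: "madj D = D"
    proof -
      have "madj (P i) = P i" "madj (P j) = P j" unfolding P_def by (rule Pop_herm)+
      thus ?thesis unfolding D_def madj_def by (metis (no_types, lifting) complex_cnj_diff)
    qed
    have "0 \<le> Re (mtr C (mmul C \<tau> (mmul C D (madj D))))" by (rule psd_mtr[OF psd])
    also have "mtr C (mmul C \<tau> (mmul C D (madj D)))
       = mtr C (mmul C \<tau> (mmul C (P i) (P i))) - mtr C (mmul C \<tau> (mmul C (P i) (P j)))
         - (mtr C (mmul C \<tau> (mmul C (P j) (P i))) - mtr C (mmul C \<tau> (mmul C (P j) (P j))))"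
      unfolding madjD unfolding D_def mmul_diff_left mmul_diff_right by (simp add: mtr_def sum_subtractf)
    finally show ?thesis using tr1[OF i] tr1[OF j] unfolding T_def by simp
  qed
  have "2 * (\<Sum>i\<in>A. \<Sum>j\<in>A. T i j) = (\<Sum>i\<in>A. \<Sum>j\<in>A. T i j) + (\<Sum>j\<in>A. \<Sum>i\<in>A. T i j)"
    using sum.swap[of T A A] by simp
  also have "\<dots> = (\<Sum>i\<in>A. \<Sum>j\<in>A. T i j + T j i)" by (simp only: sum.distrib)
  also have "\<dots> \<le> (\<Sum>i\<in>A. \<Sum>j\<in>A. 2)" using pair by (intro sum_mono) auto
  also have "\<dots> = 2 * (real (card A))^2" by (simp add: power2_eq_square)
  finally have "(\<Sum>i\<in>A. \<Sum>j\<in>A. T i j) \<le> (real (card A))^2" by simp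
  thus ?thesis unfolding C_def[symmetric] trJJ by simp
qed

lemma Jloc_decomp:
  assumes fin: "finite \<Lambda>" and disj: "disjoint \<Lambda>" and finA: "\<forall>A\<in>\<Lambda>. finite A"
    and x: "x \<in> cfg (\<Union>\<Lambda>)" and y: "y \<in> cfg (\<Union>\<Lambda>)"
  shows "Jloc n1 n2 n3 (\<Union>\<Lambda>) x y = (\<Sum>A\<in>\<Lambda>. tens \<Lambda> (\<lambda>B. if B = A then Jloc n1 n2 n3 B else idm) x y)"
proof -
  let ?P = "Pop n1 n2 n3"
  have dj: "\<forall>A\<in>\<Lambda>. \<forall>B\<in>\<Lambda>. A \<noteq> B \<longrightarrow> A \<inter> B = {}"
    using disj by (auto simp: pairwise_def disjnt_def)
  have "Jloc n1 n2 n3 (\<Union>\<Lambda>) x y = (1/2) * (\<Sum>A\<in>\<Lambda>. \<Sum>i\<in>A. ?P i x y)"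
    unfolding Jloc_def using sum.Union_disjoint[OF finA dj] by simp
  also have "\<dots> = (\<Sum>A\<in>\<Lambda>. (1/2) * (\<Sum>i\<in>A. ?P i x y))" by (simp add: sum_distrib_left)
  also have "\<dots> = (\<Sum>A\<in>\<Lambda>. tens \<Lambda> (\<lambda>B. if B = A then Jloc n1 n2 n3 B else idm) x y)"
  proof (rule sum.cong[OF refl])
    fix A assume A: "A \<in> \<Lambda>"
    have "tens \<Lambda> (\<lambda>B. if B = A then Jloc n1 n2 n3 B else idm) x y
        = Jloc n1 n2 n3 A (restr A x) (restr A y) * (\<Prod>B\<in>\<Lambda> - {A}. idm (restr B x) (restr B y))"
      unfolding tens_def
    proof (subst prod.remove[OF fin A])
      show "(if A = A then Jloc n1 n2 n3 A else idm) (restr A x) (restr A y) *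
          (\<Prod>B\<in>\<Lambda> - {A}. (if B = A then Jloc n1 n2 n3 B else idm) (restr B x) (restr B y))
          = Jloc n1 n2 n3 A (restr A x) (restr A y) * (\<Prod>B\<in>\<Lambda> - {A}. idm (restr B x) (restr B y))"
      proof -
        have "(\<Prod>B\<in>\<Lambda> - {A}. (if B = A then Jloc n1 n2 n3 B else idm) (restr B x) (restr B y))
            = (\<Prod>B\<in>\<Lambda> - {A}. idm (restr B x) (restr B y))"
          by (rule prod.cong) auto
        thus ?thesis by simp
      qed
    qed
    also have "\<dots> = (1/2) * (\<Sum>i\<in>A. ?P i x y)"
    proof (cases "\<forall>B\<in>\<Lambda> - {A}. restr B x = restr B y")
      case True
      hence d1: "(\<Prod>B\<in>\<Lambda> - {A}. idm (restr B x) (restr B y)) = (1::complex)"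
        by (intro prod.neutral) (simp add: idm_def)
      have "?P i (restr A x) (restr A y) = ?P i x y" if i: "i \<in> A" for i
      proof -
        have "(\<forall>j. j \<noteq> i \<longrightarrow> restr A x j = restr A y j) = (\<forall>j. j \<noteq> i \<longrightarrow> x j = y j)"
        proof
          assume H: "\<forall>j. j \<noteq> i \<longrightarrow> restr A x j = restr A y j"
          show "\<forall>j. j \<noteq> i \<longrightarrow> x j = y j"
          proof (intro allI impI)
            fix j assume ji: "j \<noteq> i"
            show "x j = y j"
            proof (cases "j \<in> \<Union>\<Lambda>")
              case False thus ?thesis using x y by (auto simp: cfg_def)
            next
              case True
              then obtain B where B: "B \<in> \<Lambda>" "j \<in> B" by auto
              show ?thesis
              proof (cases "B = A")
                case True thus ?thesis using H ji B by (auto simp: restr_def)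
              next
                case False
                hence "restr B x = restr B y" using \<open>\<forall>B\<in>\<Lambda> - {A}. restr B x = restr B y\<close> B by auto
                thus ?thesis using B by (metis restr_def)
              qed
            qed
          qed
        next
          assume "\<forall>j. j \<noteq> i \<longrightarrow> x j = y j"
          thus "\<forall>j. j \<noteq> i \<longrightarrow> restr A x j = restr A y j" by (auto simp: restr_def)
        qed
        moreover have "restr A x i = x i" "restr A y i = y i" using i by (auto simp: restr_def)
        ultimately show ?thesis unfolding Pop_def by (simp only:)
      qed
      thus ?thesis using d1 by (simp add: Jloc_def)
    next
      case False
      then obtain B where B: "B \<in> \<Lambda>" "B \<noteq> A" "restr B x \<noteq> restr B y" by auto
      have "idm (restr B x) (restr B y) = (0::complex)" using B by (simp add: idm_def)
      hence d0: "(\<Prod>B\<in>\<Lambda> - {A}. idm (restr B x) (restr B y)) = (0::complex)"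
        using B fin by (metis (no_types, lifting) DiffI finite_Diff prod_zero_iff singletonD)
      obtain j where j: "j \<in> B" "x j \<noteq> y j" using B(3) by (auto simp: restr_def fun_eq_iff split: if_splits)
      have jA: "j \<notin> A" using dj A B j by auto
      have "?P i x y = 0" if i: "i \<in> A" for i
        using jA i j by (intro Pop_zero) auto
      thus ?thesis using d0 by simp
    qed
    finally show "(1/2) * (\<Sum>i\<in>A. ?P i x y) = tens \<Lambda> (\<lambda>B. if B = A then Jloc n1 n2 n3 B else idm) x y" by simp
  qed
  finally show ?thesis .
qed


lemma mtr_herm_real:
  assumes hS: "\<forall>x\<in>C. \<forall>y\<in>C. S y x = cnj (S x y)" and hZ: "\<forall>x\<in>C. \<forall>y\<in>C. Z y x = cnj (Z x y)"
  shows "cnj (mtr C (mmul C S Z)) = mtr C (mmul C S Z)"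
proof -
  have "cnj (mtr C (mmul C S Z)) = (\<Sum>x\<in>C. \<Sum>y\<in>C. cnj (S x y) * cnj (Z y x))"
    by (simp add: mtr_def mmul_def)
  also have "\<dots> = (\<Sum>x\<in>C. \<Sum>y\<in>C. S y x * Z x y)"
  proof (intro sum.cong refl)
    fix x y assume x: "x \<in> C" and y: "y \<in> C"
    have "cnj (S x y) = S y x" using hS x y by metis
    moreover have "cnj (Z y x) = Z x y" using hZ x y by (metis complex_cnj_cnj)
    ultimately show "cnj (S x y) * cnj (Z y x) = S y x * Z x y" by simp
  qed
  also have "\<dots> = (\<Sum>y\<in>C. \<Sum>x\<in>C. S y x * Z x y)" by (rule sum.swap)
  also have "\<dots> = mtr C (mmul C S Z)" by (simp add: mtr_def mmul_def)
  finally show ?thesis .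
qed

lemma tens_slot_diff:
  assumes fin: "finite \<Lambda>" and A: "A \<in> \<Lambda>"
  shows "tens \<Lambda> (\<lambda>B. if B = A then (\<lambda>u v. P u v - a * Q u v) else R B) x y
       = tens \<Lambda> (\<lambda>B. if B = A then P else R B) x y - a * tens \<Lambda> (\<lambda>B. if B = A then Q else R B) x y"
proof -
  have eq: "tens \<Lambda> (\<lambda>B. if B = A then F else R B) x y = F (restr A x) (restr A y) * (\<Prod>B\<in>\<Lambda> - {A}. R B (restr B x) (restr B y))" for F
  proof -
    have "tens \<Lambda> (\<lambda>B. if B = A then F else R B) x y
      = (if A = A then F else R A) (restr A x) (restr A y) * (\<Prod>B\<in>\<Lambda> - {A}. (if B = A then F else R B) (restr B x) (restr B y))"
      unfolding tens_def by (rule prod.remove[OF fin A])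
    also have "(\<Prod>B\<in>\<Lambda> - {A}. (if B = A then F else R B) (restr B x) (restr B y)) = (\<Prod>B\<in>\<Lambda> - {A}. R B (restr B x) (restr B y))"
      by (rule prod.cong) auto
    finally show ?thesis by simp
  qed
  show ?thesis unfolding eq by (simp add: algebra_simps)
qed

lemma product_bound:
  assumes unit: "n1^2 + n2^2 + n3^2 = 1" and part: "partition_on {1..N} \<Lambda>"
    and dens: "\<forall>A\<in>\<Lambda>. density_on A (\<tau> A)"
  shows "\<exists>c::real. 4 * Re (mtr (cfg {1..N}) (mmul (cfg {1..N}) (tens \<Lambda> \<tau>)
      (mmul (cfg {1..N}) (\<lambda>x y. J_op N n1 n2 n3 x y - complex_of_real c * idm x y)
                         (\<lambda>x y. J_op N n1 n2 n3 x y - complex_of_real c * idm x y))))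
     \<le> (\<Sum>A\<in>\<Lambda>. (real (card A))^2)"
proof -
  define S where "S = {1..N}"
  have US: "\<Union>\<Lambda> = S" and disj: "disjoint \<Lambda>" using part by (auto simp: partition_on_def S_def)
  have finS: "finite S" by (simp add: S_def)
  have fin: "finite \<Lambda>" using finS US by (metis finite_UnionD)
  have finA: "\<forall>A\<in>\<Lambda>. finite A" using finS US by (metis Union_upper finite_subset)
  define C where "C = cfg S"
  have CU: "C = cfg (\<Union>\<Lambda>)" by (simp add: C_def US)
  define J where "J = (\<lambda>A. Jloc n1 n2 n3 A)"
  have JS: "J_op N n1 n2 n3 = J S" by (simp add: J_def S_def J_op_Jloc)
  define cA where "cA = (\<lambda>A. Re (mtr (cfg A) (mmul (cfg A) (\<tau> A) (J A))))"
  have trJ: "mtr (cfg A) (mmul (cfg A) (\<tau> A) (J A)) = complex_of_real (cA A)" if A: "A \<in> \<Lambda>" for A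
  proof -
    have h1: "\<forall>x\<in>cfg A. \<forall>y\<in>cfg A. \<tau> A y x = cnj (\<tau> A x y)" using dens A unfolding density_on_def by blast
    have h2: "\<forall>x\<in>cfg A. \<forall>y\<in>cfg A. J A y x = cnj (J A x y)"
      using Jloc_herm[of n1 n2 n3 A] unfolding J_def madj_def by (metis complex_cnj_cnj)
    have "cnj (mtr (cfg A) (mmul (cfg A) (\<tau> A) (J A))) = mtr (cfg A) (mmul (cfg A) (\<tau> A) (J A))"
      by (rule mtr_herm_real[OF h1 h2])
    thus ?thesis unfolding cA_def by (metis Reals_cnj_iff complex_is_Real_iff of_real_Re)
  qed
  define c where "c = (\<Sum>A\<in>\<Lambda>. cA A)"
  define K where "K = (\<lambda>A u v. J A u v - complex_of_real (cA A) * idm u v)"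
  define Ob where "Ob = (\<lambda>A B. if B = A then K A else (idm :: op))"
  define E where "E = (\<lambda>A. tens \<Lambda> (Ob A))"
  define Bm where "Bm = (\<lambda>x y. J_op N n1 n2 n3 x y - complex_of_real c * idm x y)"
  have Eeq: "E A x y = tens \<Lambda> (\<lambda>B. if B = A then J B else idm) x y - complex_of_real (cA A) * idm x y"
    if A: "A \<in> \<Lambda>" and x: "x \<in> C" and y: "y \<in> C" for A x y
  proof -
    have "E A x y = tens \<Lambda> (\<lambda>B. if B = A then J B else idm) x y - complex_of_real (cA A) * tens \<Lambda> (\<lambda>B. if B = A then idm else idm) x y"
      unfolding E_def Ob_def K_def using tens_slot_diff[OF fin A, of "J A" "complex_of_real (cA A)" idm "\<lambda>_. idm" x y]
      by (simp cong: if_cong)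
    also have "tens \<Lambda> (\<lambda>B. if B = A then idm else idm) x y = idm x y"
      using tens_idm[OF fin, of x y] x y CU by simp
    finally show ?thesis .
  qed
  have Bsum: "Bm x y = (\<Sum>A\<in>\<Lambda>. E A x y)" if x: "x \<in> C" and y: "y \<in> C" for x y
  proof -
    have "(\<Sum>A\<in>\<Lambda>. E A x y) = (\<Sum>A\<in>\<Lambda>. tens \<Lambda> (\<lambda>B. if B = A then J B else idm) x y - complex_of_real (cA A) * idm x y)"
      using Eeq x y by (intro sum.cong refl) auto
    also have "\<dots> = (\<Sum>A\<in>\<Lambda>. tens \<Lambda> (\<lambda>B. if B = A then J B else idm) x y) - complex_of_real c * idm x y"
      by (simp add: sum_subtractf c_def sum_distrib_right)
    also have "(\<Sum>A\<in>\<Lambda>. tens \<Lambda> (\<lambda>B. if B = A then J B else idm) x y) = J S x y"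
      using Jloc_decomp[OF fin disj finA, of x y n1 n2 n3] x y CU US unfolding J_def by simp
    finally show ?thesis unfolding Bm_def JS by simp
  qed
  have BB: "mmul C Bm Bm x z = (\<Sum>A\<in>\<Lambda>. \<Sum>A'\<in>\<Lambda>. mmul C (E A) (E A') x z)" if x: "x \<in> C" and z: "z \<in> C" for x z
  proof -
    have "mmul C Bm Bm x z = mmul C (\<lambda>x y. \<Sum>A\<in>\<Lambda>. E A x y) Bm x z"
      by (rule mmul_cong_left) (use Bsum x in auto)
    also have "\<dots> = mmul C (\<lambda>x y. \<Sum>A\<in>\<Lambda>. E A x y) (\<lambda>x y. \<Sum>A\<in>\<Lambda>. E A x y) x z"
      by (rule mmul_cong_right) (use Bsum z in auto)
    also have "\<dots> = (\<Sum>A\<in>\<Lambda>. \<Sum>A'\<in>\<Lambda>. mmul C (E A) (E A') x z)"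
      unfolding mmul_sum_left mmul_sum_right by simp
    finally show ?thesis .
  qed
  define \<pi> where "\<pi> = tens \<Lambda> \<tau>"
  have trBB: "mtr C (mmul C \<pi> (mmul C Bm Bm)) = (\<Sum>A\<in>\<Lambda>. \<Sum>A'\<in>\<Lambda>. mtr C (mmul C \<pi> (mmul C (E A) (E A'))))"
  proof -
    have "mtr C (mmul C \<pi> (mmul C Bm Bm)) = mtr C (mmul C \<pi> (\<lambda>x z. \<Sum>A\<in>\<Lambda>. \<Sum>A'\<in>\<Lambda>. mmul C (E A) (E A') x z))"
      by (rule mtr_cong) (use BB in auto)
    also have "\<dots> = (\<Sum>A\<in>\<Lambda>. mtr C (mmul C \<pi> (\<lambda>x z. \<Sum>A'\<in>\<Lambda>. mmul C (E A) (E A') x z)))"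
      by (rule mtr_sum)
    also have "\<dots> = (\<Sum>A\<in>\<Lambda>. \<Sum>A'\<in>\<Lambda>. mtr C (mmul C \<pi> (mmul C (E A) (E A'))))"
      by (simp only: mtr_sum)
    finally show ?thesis .
  qed
  define f where "f = (\<lambda>A A' B. mtr (cfg B) (mmul (cfg B) (\<tau> B) (mmul (cfg B) (Ob A B) (Ob A' B))))"
  have termeq: "mtr C (mmul C \<pi> (mmul C (E A) (E A'))) = (\<Prod>B\<in>\<Lambda>. f A A' B)" for A A'
  proof -
    have "mmul C \<pi> (mmul C (E A) (E A')) = tens \<Lambda> (\<lambda>B. mmul (cfg B) (\<tau> B) (mmul (cfg B) (Ob A B) (Ob A' B)))"
      unfolding CU \<pi>_def E_def tens_mult[OF fin disj] ..
    thus ?thesis unfolding CU f_def by (simp add: tens_tr[OF fin disj])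
  qed
  have fid: "f A A' B = 1" if B: "B \<in> \<Lambda>" "B \<noteq> A" "B \<noteq> A'" for A A' B
  proof -
    have fB: "finite B" using finA B by auto
    have "f A A' B = mtr (cfg B) (mmul (cfg B) (\<tau> B) idm)"
      unfolding f_def Ob_def using B
      by (simp, intro mtr_cong) (use mmul_idm_left[OF _ finite_cfg[OF fB]] in auto)
    also have "\<dots> = 1" using mtr_density_idm dens B fB by blast
    finally show ?thesis .
  qed
  have trK: "mtr (cfg A) (mmul (cfg A) (\<tau> A) (K A)) = 0" if A: "A \<in> \<Lambda>" for A
  proof -
    have fA: "finite A" using finA A by auto
    have "mtr (cfg A) (mmul (cfg A) (\<tau> A) (K A)) = mtr (cfg A) (mmul (cfg A) (\<tau> A) (J A)) - complex_of_real (cA A) * mtr (cfg A) (mmul (cfg A) (\<tau> A) idm)"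
      unfolding K_def mtr_diff mtr_smult ..
    also have "\<dots> = 0" using trJ[OF A] mtr_density_idm[of A "\<tau> A"] dens A fA by simp
    finally show ?thesis .
  qed
  have cross: "(\<Prod>B\<in>\<Lambda>. f A A' B) = 0" if A: "A \<in> \<Lambda>" and A': "A' \<in> \<Lambda>" and ne: "A \<noteq> A'" for A A'
  proof -
    have fA: "finite A" using finA A by auto
    have "f A A' A = mtr (cfg A) (mmul (cfg A) (\<tau> A) (mmul (cfg A) (K A) idm))"
      unfolding f_def Ob_def using ne by simp
    also have "\<dots> = mtr (cfg A) (mmul (cfg A) (\<tau> A) (K A))"
      by (rule mtr_cong) (use mmul_idm_right[OF _ finite_cfg[OF fA]] in auto)
    also have "\<dots> = 0" by (rule trK[OF A])
    finally show ?thesis using A fin by (metis prod_zero_iff)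
  qed
  have diag: "(\<Prod>B\<in>\<Lambda>. f A A B) = mtr (cfg A) (mmul (cfg A) (\<tau> A) (mmul (cfg A) (K A) (K A)))" if A: "A \<in> \<Lambda>" for A
  proof -
    have "(\<Prod>B\<in>\<Lambda>. f A A B) = f A A A * (\<Prod>B\<in>\<Lambda> - {A}. f A A B)" by (rule prod.remove[OF fin A])
    also have "(\<Prod>B\<in>\<Lambda> - {A}. f A A B) = 1" using fid by (intro prod.neutral) auto
    finally show ?thesis by (simp add: f_def Ob_def)
  qed
  have trBB2: "mtr C (mmul C \<pi> (mmul C Bm Bm)) = (\<Sum>A\<in>\<Lambda>. mtr (cfg A) (mmul (cfg A) (\<tau> A) (mmul (cfg A) (K A) (K A))))"
  proof -
    have "mtr C (mmul C \<pi> (mmul C Bm Bm)) = (\<Sum>A\<in>\<Lambda>. \<Sum>A'\<in>\<Lambda>. if A' = A then mtr (cfg A) (mmul (cfg A) (\<tau> A) (mmul (cfg A) (K A) (K A))) else 0)"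
      unfolding trBB termeq using cross diag by (intro sum.cong refl) auto
    also have "\<dots> = (\<Sum>A\<in>\<Lambda>. mtr (cfg A) (mmul (cfg A) (\<tau> A) (mmul (cfg A) (K A) (K A))))"
      using fin by (simp add: sum.delta)
    finally show ?thesis .
  qed
  have KK: "Re (mtr (cfg A) (mmul (cfg A) (\<tau> A) (mmul (cfg A) (K A) (K A)))) \<le> (real (card A))^2 / 4"
    if A: "A \<in> \<Lambda>" for A
  proof -
    have fA: "finite A" using finA A by auto
    have fC: "finite (cfg A)" using finite_cfg[OF fA] .
    define a where "a = cA A"
    have KKeq: "mmul (cfg A) (K A) (K A) u v = (mmul (cfg A) (J A) (J A) u v - complex_of_real (2 * a) * J A u v) + complex_of_real (a * a) * idm u v"
      if u: "u \<in> cfg A" and v: "v \<in> cfg A" for u v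
    proof -
      have "mmul (cfg A) (K A) (K A) u v = mmul (cfg A) (J A) (J A) u v - complex_of_real a * mmul (cfg A) (J A) idm u v
          - complex_of_real a * (mmul (cfg A) idm (J A) u v - complex_of_real a * mmul (cfg A) idm idm u v)"
        unfolding K_def a_def[symmetric] mmul_diff_left mmul_diff_right mmul_smult_left mmul_smult_right by (simp add: algebra_simps)
      also have "\<dots> = mmul (cfg A) (J A) (J A) u v - complex_of_real a * J A u v
          - complex_of_real a * (J A u v - complex_of_real a * idm u v)"
        using mmul_idm_right[OF v fC] mmul_idm_left[OF u fC] by simp
      finally show ?thesis by (simp add: algebra_simps)
    qed
    have "mtr (cfg A) (mmul (cfg A) (\<tau> A) (mmul (cfg A) (K A) (K A)))
        = mtr (cfg A) (mmul (cfg A) (\<tau> A) (\<lambda>u v. (mmul (cfg A) (J A) (J A) u v - complex_of_real (2 * a) * J A u v) + complex_of_real (a * a) * idm u v))"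
      by (rule mtr_cong) (use KKeq in auto)
    also have "\<dots> = mtr (cfg A) (mmul (cfg A) (\<tau> A) (mmul (cfg A) (J A) (J A))) - complex_of_real (2 * a) * mtr (cfg A) (mmul (cfg A) (\<tau> A) (J A))
        + complex_of_real (a * a) * mtr (cfg A) (mmul (cfg A) (\<tau> A) idm)"
      unfolding mtr_add mtr_diff mtr_smult ..
    also have "\<dots> = mtr (cfg A) (mmul (cfg A) (\<tau> A) (mmul (cfg A) (J A) (J A))) - complex_of_real (a * a)"
      using trJ[OF A] mtr_density_idm[of A "\<tau> A"] dens A fA unfolding a_def by simp
    finally have "Re (mtr (cfg A) (mmul (cfg A) (\<tau> A) (mmul (cfg A) (K A) (K A))))
        = Re (mtr (cfg A) (mmul (cfg A) (\<tau> A) (mmul (cfg A) (J A) (J A)))) - a * a" by simp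
    also have "\<dots> \<le> Re (mtr (cfg A) (mmul (cfg A) (\<tau> A) (mmul (cfg A) (J A) (J A))))" by simp
    also have "\<dots> \<le> (real (card A))^2 / 4"
      unfolding J_def using Jloc_bound[OF unit fA] dens A by blast
    finally show ?thesis .
  qed
  have "4 * Re (mtr C (mmul C \<pi> (mmul C Bm Bm))) = 4 * (\<Sum>A\<in>\<Lambda>. Re (mtr (cfg A) (mmul (cfg A) (\<tau> A) (mmul (cfg A) (K A) (K A)))))"
    unfolding trBB2 by (simp add: Re_sum)
  also have "\<dots> \<le> 4 * (\<Sum>A\<in>\<Lambda>. (real (card A))^2 / 4)"
    using KK by (intro mult_left_mono sum_mono) auto
  also have "\<dots> = (\<Sum>A\<in>\<Lambda>. (real (card A))^2)" by (simp add: sum_distrib_left)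
  finally show ?thesis unfolding C_def S_def Bm_def \<pi>_def by blast
qed

lemma int_core:
  fixes k T R :: int
  assumes "R \<le> k * T" "R \<le> (1 + T) * T" "T \<ge> 0" "k \<ge> 1" "\<not> (T = 1 \<and> k = 2)" "T = 1 \<longrightarrow> k \<ge> 2"
  shows "4 * (k * (k - 1) + R) \<le> (2 * k - 1 + T)^2 - 1"
proof -
  have id: "(2 * k - 1 + T)^2 - 1 = 4 * (k * (k - 1)) + ((4 * k - 2) * T + T * T)"
    by (simp add: power2_eq_square algebra_simps)
  have "4 * R \<le> (4 * k - 2) * T + T * T"
  proof (cases "T = 0")
    case True thus ?thesis using assms(1) by simp
  next
    case False
    show ?thesis
    proof (cases "T = 1")
      case True
      hence "k \<ge> 3" using assms(5,6) by auto
      thus ?thesis using assms(2) True by simp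
    next
      case False
      hence "T \<ge> 2" using \<open>T \<noteq> 0\<close> assms(3) by auto
      hence "2 * T \<le> T * T" by (simp add: mult_right_mono)
      thus ?thesis using assms(1) by (simp add: algebra_simps)
    qed
  qed
  thus ?thesis unfolding id by simp
qed


lemma comb_bound:
  assumes N1: "N \<ge> 1" and part: "partition_on {1..N} \<Lambda>"
    and rk: "int (Max (card ` \<Lambda>)) - int (card \<Lambda>) \<le> r"
  shows "(r \<noteq> 4 - int N \<longrightarrow> (\<Sum>A\<in>\<Lambda>. (real (card A))^2) \<le> (real_of_int (int N + r))^2 / 4 - 1/4 + real N) \<and>
         (r = 4 - int N \<longrightarrow> (\<Sum>A\<in>\<Lambda>. (real (card A))^2) \<le> real N + 4)"
proof -
  define S where "S = {1..N}"
  have US: "\<Union>\<Lambda> = S" and disj: "disjoint \<Lambda>" and ne: "{} \<notin> \<Lambda>" using part by (auto simp: partition_on_def S_def)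
  have finS: "finite S" by (simp add: S_def)
  have fin: "finite \<Lambda>" using finS US by (metis finite_UnionD)
  have finA: "\<And>A. A \<in> \<Lambda> \<Longrightarrow> finite A" using finS US by (metis Union_upper finite_subset)
  have cardA1: "\<And>A. A \<in> \<Lambda> \<Longrightarrow> card A \<ge> 1" using finA ne by (metis card_0_eq less_one not_less)
  have SN: "card S = N" by (simp add: S_def)
  have sumN: "(\<Sum>A\<in>\<Lambda>. card A) = N" using card_Union_disjoint[OF disj finA] US SN by simp
  have Sne: "S \<noteq> {}" using N1 by (auto simp: S_def)
  have Lne: "\<Lambda> \<noteq> {}" using US Sne by auto
  define k where "k = Max (card ` \<Lambda>)"
  have "k \<in> card ` \<Lambda>" unfolding k_def using fin Lne by (intro Max_in) auto
  then obtain A0 where A0: "A0 \<in> \<Lambda>" "card A0 = k" by auto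
  have le_k: "\<And>A. A \<in> \<Lambda> \<Longrightarrow> card A \<le> k" unfolding k_def using fin by auto
  define m where "m = card \<Lambda>"
  have mN: "m \<le> N"
  proof -
    have "(\<Sum>A\<in>\<Lambda>. (1::nat)) \<le> (\<Sum>A\<in>\<Lambda>. card A)" using cardA1 by (intro sum_mono) auto
    thus ?thesis using sumN by (simp add: m_def)
  qed
  define L where "L = \<Lambda> - {A0}"
  define n where "n = (\<lambda>A::nat set. int (card A))"
  define T where "T = (\<Sum>A\<in>L. n A - 1)"
  define R where "R = (\<Sum>A\<in>L. n A * (n A - 1))"
  have finL: "finite L" using fin by (simp add: L_def)
  have sumL: "(\<Sum>A\<in>L. n A) = int N - int k"
  proof -
    have "(\<Sum>A\<in>\<Lambda>. n A) = n A0 + (\<Sum>A\<in>L. n A)" unfolding L_def by (rule sum.remove[OF fin A0(1)])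
    moreover have "(\<Sum>A\<in>\<Lambda>. n A) = int N" using sumN unfolding n_def by (metis of_nat_sum)
    ultimately show ?thesis using A0 by (simp add: n_def)
  qed
  have cardL: "card L = m - 1" using A0 fin by (simp add: L_def m_def)
  have m1: "m \<ge> 1" using fin Lne by (simp add: m_def Suc_leI card_gt_0_iff)
  have Tdef: "T = int N - int k - (int m - 1)"
  proof -
    have "T = (\<Sum>A\<in>L. n A) - int (card L)" unfolding T_def by (simp add: sum_subtractf)
    thus ?thesis using sumL cardL m1 by simp
  qed
  have LL: "\<And>A. A \<in> L \<Longrightarrow> A \<in> \<Lambda>" by (simp add: L_def)
  have T0: "T \<ge> 0" unfolding T_def
  proof (rule sum_nonneg)
    fix A assume A: "A \<in> L"
    have "card A \<ge> 1" using cardA1[OF LL[OF A]] .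
    thus "0 \<le> n A - 1" by (simp add: n_def)
  qed
  have RkT: "R \<le> int k * T" unfolding R_def T_def sum_distrib_left
  proof (rule sum_mono)
    fix A assume A: "A \<in> L"
    have "n A \<le> int k" "n A - 1 \<ge> 0" using le_k[OF LL[OF A]] cardA1[OF LL[OF A]] by (auto simp: n_def)
    thus "n A * (n A - 1) \<le> int k * (n A - 1)" by (simp add: mult_right_mono)
  qed
  have nnL: "\<forall>B\<in>L. 0 \<le> n B - 1"
  proof
    fix B assume B: "B \<in> L"
    have "card B \<ge> 1" using cardA1[OF LL[OF B]] .
    thus "0 \<le> n B - 1" by (simp add: n_def)
  qed
  have RTT: "R \<le> (1 + T) * T"
  proof -
    have "R \<le> (\<Sum>A\<in>L. (1 + T) * (n A - 1))" unfolding R_def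
    proof (rule sum_mono)
      fix A assume A: "A \<in> L"
      have "n A - 1 \<le> T" unfolding T_def by (rule member_le_sum[OF A]) (use nnL finL in auto)
      moreover have "n A - 1 \<ge> 0" using nnL A by auto
      ultimately show "n A * (n A - 1) \<le> (1 + T) * (n A - 1)" by (simp add: mult_right_mono)
    qed
    also have "\<dots> = (1 + T) * T" unfolding T_def by (simp add: sum_distrib_left)
    finally show ?thesis .
  qed
  have k1: "k \<ge> 1" using cardA1[OF A0(1)] A0(2) by simp
  have Tk: "T = 1 \<longrightarrow> int k \<ge> 2"
  proof (rule ccontr)
    assume "\<not> (T = 1 \<longrightarrow> int k \<ge> 2)"
    hence T1: "T = 1" and kk: "k \<le> 1" by auto
    have "T = 0" unfolding T_def
    proof (rule sum.neutral, intro ballI)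
      fix A assume A: "A \<in> L"
      have "card A \<le> 1" using le_k[OF LL[OF A]] kk by simp
      moreover have "card A \<ge> 1" using cardA1[OF LL[OF A]] .
      ultimately show "n A - 1 = 0" by (simp add: n_def)
    qed
    thus False using T1 by simp
  qed
  have total: "(\<Sum>A\<in>\<Lambda>. n A * n A) = int N + (int k * (int k - 1) + R)"
  proof -
    have "(\<Sum>A\<in>\<Lambda>. n A * n A) = (\<Sum>A\<in>\<Lambda>. n A) + (\<Sum>A\<in>\<Lambda>. n A * (n A - 1))"
      by (simp add: sum.distrib[symmetric] algebra_simps)
    also have "(\<Sum>A\<in>\<Lambda>. n A) = int N" using sumN unfolding n_def by (metis of_nat_sum)
    also have "(\<Sum>A\<in>\<Lambda>. n A * (n A - 1)) = n A0 * (n A0 - 1) + R"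
      unfolding R_def L_def by (rule sum.remove[OF fin A0(1)])
    finally show ?thesis using A0 by (simp add: n_def)
  qed
  define D where "D = int N + int k - int m"
  have DT: "D = 2 * int k - 1 + T" unfolding D_def Tdef by simp
  have D1: "D \<ge> 1" using k1 mN by (simp add: D_def)
  have Dr: "D \<le> int N + r" using rk unfolding D_def k_def m_def by simp
  have realsum: "(\<Sum>A\<in>\<Lambda>. (real (card A))^2) = real_of_int (\<Sum>A\<in>\<Lambda>. n A * n A)"
    by (simp add: n_def power2_eq_square)
  show ?thesis
  proof (cases "T = 1 \<and> int k = 2")
    case True
    hence "R \<le> 2" using RTT by simp
    hence le4: "(\<Sum>A\<in>\<Lambda>. n A * n A) \<le> int N + 4" using total True by simp
    have le4r: "real_of_int (\<Sum>A\<in>\<Lambda>. n A * n A) \<le> real N + 4"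
    proof -
      have "real_of_int (\<Sum>A\<in>\<Lambda>. n A * n A) \<le> real_of_int (int N + 4)" using le4 by (simp only: of_int_le_iff)
      thus ?thesis by simp
    qed
    have D4: "D = 4" using DT True by simp
    show ?thesis
    proof (cases "r = 4 - int N")
      case True
      thus ?thesis unfolding realsum using le4r by simp
    next
      case False
      hence r5: "int N + r \<ge> 5" using D4 Dr by simp
      hence "(real_of_int (int N + r))^2 \<ge> 5^2"
        by (intro power_mono) (simp_all add: of_int_le_iff[symmetric, where 'a=real])
      hence "(real_of_int (int N + r))^2 / 4 - 1/4 + real N \<ge> real N + 6" by simp
      thus ?thesis unfolding realsum using le4r False by linarith
    qed
  next
    case False
    have core: "4 * (int k * (int k - 1) + R) \<le> (2 * int k - 1 + T)^2 - 1"
      by (rule int_core[OF RkT RTT T0]) (use k1 False Tk in auto)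
    have "D^2 \<le> (int N + r)^2" using D1 Dr by (intro power_mono) auto
    hence iq: "4 * (\<Sum>A\<in>\<Lambda>. n A * n A) \<le> 4 * int N + (int N + r)^2 - 1"
      using core total DT by simp
    hence "real_of_int (4 * (\<Sum>A\<in>\<Lambda>. n A * n A)) \<le> real_of_int (4 * int N + (int N + r)^2 - 1)"
      by (simp only: of_int_le_iff)
    hence riq: "4 * real_of_int (\<Sum>A\<in>\<Lambda>. n A * n A) \<le> 4 * real N + (real_of_int (int N + r))^2 - 1"
      by (simp only: of_int_mult of_int_add of_int_diff of_int_power of_int_of_nat_eq of_int_numeral of_int_1)
    show ?thesis
    proof (intro conjI impI)
      show "(\<Sum>A\<in>\<Lambda>. (real (card A))^2) \<le> (real_of_int (int N + r))^2 / 4 - 1/4 + real N"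
        unfolding realsum using riq by linarith
      assume r4: "r = 4 - int N"
      hence "real_of_int (int N + r) = 4" by simp
      thus "(\<Sum>A\<in>\<Lambda>. (real (card A))^2) \<le> real N + 4" unfolding realsum using riq by simp
    qed
  qed
qed

lemma mtr_lin:
  assumes "\<forall>x\<in>C. \<forall>y\<in>C. \<rho> x y = (\<Sum>j<m. complex_of_real (p j) * \<sigma> j x y)"
  shows "mtr C (mmul C \<rho> Y) = (\<Sum>j<m. complex_of_real (p j) * mtr C (mmul C (\<sigma> j) Y))"
proof -
  have "mtr C (mmul C \<rho> Y) = (\<Sum>x\<in>C. \<Sum>y\<in>C. (\<Sum>j<m. complex_of_real (p j) * \<sigma> j x y) * Y y x)"
    unfolding mtr_def mmul_def using assms by (intro sum.cong refl) auto
  also have "\<dots> = (\<Sum>x\<in>C. \<Sum>j<m. \<Sum>y\<in>C. complex_of_real (p j) * (\<sigma> j x y * Y y x))"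
    by (intro sum.cong refl, subst sum_distrib_right, subst sum.swap) (simp add: mult.assoc)
  also have "\<dots> = (\<Sum>j<m. \<Sum>x\<in>C. \<Sum>y\<in>C. complex_of_real (p j) * (\<sigma> j x y * Y y x))"
    by (rule sum.swap)
  also have "\<dots> = (\<Sum>j<m. complex_of_real (p j) * mtr C (mmul C (\<sigma> j) Y))"
    by (simp add: mtr_def mmul_def sum_distrib_left)
  finally show ?thesis .
qed

lemma convex_bound:
  assumes "\<forall>j<m. 0 \<le> p j" "(\<Sum>j<m. p j) = 1" "\<forall>j<m. Re (X j) \<le> b"
  shows "Re (\<Sum>j<m. complex_of_real (p j) * X j) \<le> (b::real)"
proof -
  have "Re (\<Sum>j<m. complex_of_real (p j) * X j) = (\<Sum>j<m. p j * Re (X j))" by (simp add: Re_sum)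
  also have "\<dots> \<le> (\<Sum>j<m. p j * b)" using assms by (intro sum_mono mult_left_mono) auto
  also have "\<dots> = b" using assms(2) by (simp add: sum_distrib_right[symmetric])
  finally show ?thesis .
qed

theorem mainTheorem5:
  fixes N :: nat and r :: int and \<rho> :: op and n1 n2 n3 :: real
  assumes "N \<ge> 1"
    and "- (int N - 1) \<le> r" and "r \<le> int N - 1"
    and "r \<noteq> int N - 2" and "r \<noteq> - (int N - 2)"
    and "density_on {1..N} \<rho>"
    and "dyson_rank_le N r \<rho>"
    and "n1^2 + n2^2 + n3^2 = 1"
  shows "(r \<noteq> 4 - int N \<longrightarrow>
            QFI {1..N} \<rho> (J_op N n1 n2 n3) \<le> (real_of_int (int N + r))^2 / 4 - 1/4 + real N) \<and>
         (r = 4 - int N \<longrightarrow> QFI {1..N} \<rho> (J_op N n1 n2 n3) \<le> real N + 4)"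
proof -
  note N1 = assms(1) and dens = assms(6) and dy = assms(7) and unit = assms(8)
  define S where "S = {1..N}"
  define C where "C = cfg S"
  have finS: "finite S" by (simp add: S_def)
  have finC: "finite C" using finite_cfg[OF finS] by (simp add: C_def)
  define J where "J = J_op N n1 n2 n3"
  have rherm: "\<forall>x\<in>C. \<forall>y\<in>C. \<rho> y x = cnj (\<rho> x y)" using dens unfolding density_on_def C_def S_def by blast
  obtain U lam where u1: "\<forall>x\<in>C. \<forall>y\<in>C. mmul C (madj U) U x y = idm x y"
    and eig: "\<forall>k\<in>C. \<forall>x\<in>C. mvec C \<rho> (\<lambda>y. U y k) x = complex_of_real (lam k) * U x k"
    using spectral[OF finC rherm] by blast
  have ex: "eigendecomp S \<rho> (\<lambda>k x. U x k) lam"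
    unfolding eigendecomp_def
  proof (intro conjI ballI)
    fix k l assume "k \<in> cfg S" "l \<in> cfg S"
    thus "(\<Sum>x\<in>cfg S. cnj (U x k) * U x l) = (if k = l then 1 else 0)"
      using u1 unfolding C_def by (simp add: mmul_def madj_def idm_def)
  next
    fix k x assume "k \<in> cfg S" "x \<in> cfg S"
    thus "(\<Sum>y\<in>cfg S. \<rho> x y * U y k) = complex_of_real (lam k) * U x k"
      using eig unfolding C_def by (simp add: mvec_def)
  qed
  define pr where "pr = (SOME (e, lam). eigendecomp S \<rho> e lam)"
  have "case pr of (e, lam) \<Rightarrow> eigendecomp S \<rho> e lam"
    unfolding pr_def by (rule someI_ex) (use ex in auto)
  then obtain e0 lam0 where pr: "pr = (e0, lam0)" and ed: "eigendecomp S \<rho> e0 lam0"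
    by (cases pr) auto
  have QFIeq: "QFI {1..N} \<rho> J = 2 * (\<Sum>k\<in>C. \<Sum>l\<in>C. if lam0 k + lam0 l > 0
             then (lam0 k - lam0 l)^2 / (lam0 k + lam0 l) * (cmod (\<Sum>x\<in>C. \<Sum>y\<in>C. cnj (e0 k x) * J x y * e0 l y))^2
             else 0)"
    unfolding QFI_def S_def[symmetric] pr_def[symmetric] pr C_def mat_el_def by simp
  have orth: "\<forall>k\<in>C. \<forall>l\<in>C. (\<Sum>x\<in>C. cnj (e0 k x) * e0 l x) = (if k = l then 1 else 0)"
    and eig0: "\<forall>k\<in>C. \<forall>x\<in>C. (\<Sum>y\<in>C. \<rho> x y * e0 k y) = complex_of_real (lam0 k) * e0 k x"
    using ed unfolding eigendecomp_def C_def by blast+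
  have Jherm: "\<forall>x\<in>C. \<forall>y\<in>C. J y x = cnj (J x y)"
    using Jloc_herm[of n1 n2 n3 "{1..N}"] unfolding J_def J_op_Jloc madj_def by (metis complex_cnj_cnj)
  obtain Y where Y1: "QFI {1..N} \<rho> J = Re (mtr C (mmul C \<rho> Y))"
    and Y2: "\<forall>\<sigma> (c::real). (\<forall>v. 0 \<le> Re (\<Sum>x\<in>C. \<Sum>y\<in>C. cnj (v x) * \<sigma> x y * v y)) \<longrightarrow>
          Re (mtr C (mmul C \<sigma> Y)) \<le> 4 * Re (mtr C (mmul C \<sigma>
             (mmul C (\<lambda>x y. J x y - complex_of_real c * idm x y) (\<lambda>x y. J x y - complex_of_real c * idm x y))))"
    using qfi_functional[OF finC orth eig0 Jherm] QFIeq by auto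
  define b where "b = (if r = 4 - int N then real N + 4 else (real_of_int (int N + r))^2 / 4 - 1/4 + real N)"
  obtain m :: nat and p \<Lambda> \<sigma> where p0: "\<forall>j<m. 0 \<le> p j" and p1: "(\<Sum>j<m. p j) = 1"
    and LL: "\<forall>j<m. partition_on {1..N} (\<Lambda> j) \<and> int (Max (card ` \<Lambda> j)) - int (card (\<Lambda> j)) \<le> r \<and> separable_wrt N (\<Lambda> j) (\<sigma> j)"
    and rdec: "\<forall>x\<in>cfg {1..N}. \<forall>y\<in>cfg {1..N}. \<rho> x y = (\<Sum>j<m. complex_of_real (p j) * \<sigma> j x y)"
    using dy unfolding dyson_rank_le_def by blast
  have sigma_bound: "Re (mtr C (mmul C (\<sigma> j) Y)) \<le> b" if j: "j < m" for j
  proof -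
    have part: "partition_on {1..N} (\<Lambda> j)" and rk: "int (Max (card ` \<Lambda> j)) - int (card (\<Lambda> j)) \<le> r"
      and sep: "separable_wrt N (\<Lambda> j) (\<sigma> j)" using LL j by auto
    have cb: "(\<Sum>A\<in>\<Lambda> j. (real (card A))^2) \<le> b"
      using comb_bound[OF N1 part rk] unfolding b_def by auto
    obtain mj :: nat and pj \<tau> where q0: "\<forall>g<mj. 0 \<le> pj g" and q1: "(\<Sum>g<mj. pj g) = 1"
      and td: "\<forall>g<mj. \<forall>A\<in>\<Lambda> j. density_on A (\<tau> g A)"
      and sdec: "\<forall>x\<in>cfg {1..N}. \<forall>y\<in>cfg {1..N}. \<sigma> j x y = (\<Sum>g<mj. complex_of_real (pj g) *
                        (\<Prod>A\<in>\<Lambda> j. \<tau> g A (restr A x) (restr A y)))"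
      using sep unfolding separable_wrt_def by blast
    have US: "\<Union>(\<Lambda> j) = S" and disj: "disjoint (\<Lambda> j)" using part by (auto simp: partition_on_def S_def)
    have finL: "finite (\<Lambda> j)" using finS US by (metis finite_UnionD)
    have finA: "\<forall>A\<in>\<Lambda> j. finite A" using finS US by (metis Union_upper finite_subset)
    have sdec': "\<forall>x\<in>C. \<forall>y\<in>C. \<sigma> j x y = (\<Sum>g<mj. complex_of_real (pj g) * tens (\<Lambda> j) (\<tau> g) x y)"
      using sdec unfolding C_def S_def tens_def by blast
    have "Re (mtr C (mmul C (\<sigma> j) Y)) = Re (\<Sum>g<mj. complex_of_real (pj g) * mtr C (mmul C (tens (\<Lambda> j) (\<tau> g)) Y))"
      using mtr_lin[OF sdec'] by simp
    also have "\<dots> \<le> b"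
    proof (rule convex_bound[OF q0 q1], intro allI impI)
      fix g assume g: "g < mj"
      have dg: "\<forall>A\<in>\<Lambda> j. density_on A (\<tau> g A)" using td g by auto
      have psd: "\<forall>v. 0 \<le> Re (\<Sum>x\<in>C. \<Sum>y\<in>C. cnj (v x) * tens (\<Lambda> j) (\<tau> g) x y * v y)"
        using tens_psd[OF finL disj finA dg] US unfolding C_def by simp
      obtain c :: real where c: "4 * Re (mtr (cfg {1..N}) (mmul (cfg {1..N}) (tens (\<Lambda> j) (\<tau> g))
          (mmul (cfg {1..N}) (\<lambda>x y. J_op N n1 n2 n3 x y - complex_of_real c * idm x y)
                             (\<lambda>x y. J_op N n1 n2 n3 x y - complex_of_real c * idm x y))))
          \<le> (\<Sum>A\<in>\<Lambda> j. (real (card A))^2)"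
        using product_bound[OF unit part dg] by blast
      have "Re (mtr C (mmul C (tens (\<Lambda> j) (\<tau> g)) Y)) \<le> 4 * Re (mtr C (mmul C (tens (\<Lambda> j) (\<tau> g))
             (mmul C (\<lambda>x y. J x y - complex_of_real c * idm x y) (\<lambda>x y. J x y - complex_of_real c * idm x y))))"
        using Y2 psd by blast
      also have "\<dots> \<le> (\<Sum>A\<in>\<Lambda> j. (real (card A))^2)" using c unfolding C_def S_def J_def .
      also have "\<dots> \<le> b" by (rule cb)
      finally show "Re (mtr C (mmul C (tens (\<Lambda> j) (\<tau> g)) Y)) \<le> b" .
    qed
    finally show ?thesis .
  qed
  have rdec': "\<forall>x\<in>C. \<forall>y\<in>C. \<rho> x y = (\<Sum>j<m. complex_of_real (p j) * \<sigma> j x y)"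
    using rdec unfolding C_def S_def .
  have "QFI {1..N} \<rho> J \<le> b"
    unfolding Y1 mtr_lin[OF rdec'] by (rule convex_bound[OF p0 p1]) (use sigma_bound in auto)
  thus ?thesis unfolding b_def J_def by auto
qed

end
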